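(* If $K_n\overset{hered}{\longrightarrow}K_c$ then $n\le c$. Consequently $\chi_{hered}(K_n)=n$.
   Context: $K_c$ is the complete graph on $c$ vertices; graphs are finite, loopless, with symmetric edge sets. For $|I|=N$, $|O|=m$ ($O=\{0,\dots,m-1\}$) let $\mathbb F(N,m)$ be the free product of $N$ copies of the cyclic group of order $m$ with generators $u_v$, $\mathbb C[\mathbb F(N,m)]$ its group $*$-algebra, $\omega=e^{2\pi i/m}$, $e_{v,a}=\frac1m\sum_{k=0}^{m-1}(\omega^{-a}u_v)^k$. For graphs $G,H$, the graph homomorphism game has $I=V(G)$, $O=V(H)$, $\lambda(v,w,a,b)=0$ iff ($v=w$, $a\ne b$) or ($(v,w)\in E(G)$, $(a,b)\notin E(H)$); $\mathcal I(G,H)$ is the two-sided $*$-ideal generated by $\{e_{v,a}e_{w,b}:\lambda(v,w,a,b)=0\}$. Let $\mathcal P$ be the cone of finite sums of $f^*f$; for self-adjoint $h,k$, $h\le k$ means $k-h\in\mathcal P$. A self-adjoint subspace $V$ is hereditary if $0\le f\le h\in V$ implies $f\in V$. $\mathcal I^h(G,H)$ is the smallest hereditary subspace containing $\mathcal I(G,H)$, and $\mathcal A^h(G,H)=\mathbb C[\mathbb F(N,m)]/\mathcal I^h(G,H)$. Write $G\overset{hered}{\longrightarrow}H$ if $\mathcal A^h(G,H)\ne0$, and $\chi_{hered}(G)=\min\{c:\mathcal A^h(G,K_c)\ne0\}$. *)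

theory Defs
  imports Complex_Main
begin

text \<open>A graph is a pair (n, E): vertex set {0..<n} and an edge relation E
  (loopless and symmetric for the graphs considered).\<close>
type_synonym graph = "nat \<times> (nat \<Rightarrow> nat \<Rightarrow> bool)"

definition complete_graph :: "nat \<Rightarrow> graph" ("K") where
  "K c = (c, \<lambda>a b. a \<noteq> b)"

section \<open>The group F(N,m): free product of N copies of Z/m, as reduced words\<close>

text \<open>A word is a list of pairs (v,k) meaning u_v^k. Reduced words: v < N,
  0 < k < m, adjacent letters have distinct generators.\<close>
type_synonym word = "(nat \<times> nat) list"

definition reduced :: "nat \<Rightarrow> nat \<Rightarrow> word \<Rightarrow> bool" where
  "reduced N m w \<longleftrightarrow> (\<forall>(v,k)\<in>set w. v < N \<and> 0 < k \<and> k < m) \<and>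
     (\<forall>i. Suc i < length w \<longrightarrow> fst (w ! i) \<noteq> fst (w ! Suc i))"

fun cons_red :: "nat \<Rightarrow> nat \<times> nat \<Rightarrow> word \<Rightarrow> word" where
  "cons_red m (v,k) w =
     (if k mod m = 0 then w else
      (case w of [] \<Rightarrow> [(v, k mod m)]
       | (v',k') # w' \<Rightarrow>
           (if v = v' then (if (k + k') mod m = 0 then w' else (v, (k + k') mod m) # w')
            else (v, k mod m) # w)))"

definition wmult :: "nat \<Rightarrow> word \<Rightarrow> word \<Rightarrow> word" where
  "wmult m x y = foldr (cons_red m) x y"

definition winv :: "nat \<Rightarrow> word \<Rightarrow> word" where
  "winv m w = rev (map (\<lambda>(v,k). (v, m - k)) w)"

definition Alg :: "nat \<Rightarrow> nat \<Rightarrow> (word \<Rightarrow> complex) set" where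
  "Alg N m = {f. finite {w. f w \<noteq> 0} \<and> (\<forall>w. f w \<noteq> 0 \<longrightarrow> reduced N m w)}"

definition azero :: "word \<Rightarrow> complex" where
  "azero = (\<lambda>_. 0)"

definition aone :: "word \<Rightarrow> complex" where
  "aone = (\<lambda>w. if w = [] then 1 else 0)"

definition delta :: "word \<Rightarrow> word \<Rightarrow> complex" where
  "delta x = (\<lambda>w. if w = x then 1 else 0)"

definition aadd :: "(word \<Rightarrow> complex) \<Rightarrow> (word \<Rightarrow> complex) \<Rightarrow> word \<Rightarrow> complex" where
  "aadd f g = (\<lambda>w. f w + g w)"

definition asub :: "(word \<Rightarrow> complex) \<Rightarrow> (word \<Rightarrow> complex) \<Rightarrow> word \<Rightarrow> complex" where
  "asub f g = (\<lambda>w. f w - g w)"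

definition ascale :: "complex \<Rightarrow> (word \<Rightarrow> complex) \<Rightarrow> word \<Rightarrow> complex" where
  "ascale c f = (\<lambda>w. c * f w)"

definition amult :: "nat \<Rightarrow> (word \<Rightarrow> complex) \<Rightarrow> (word \<Rightarrow> complex) \<Rightarrow> word \<Rightarrow> complex" where
  "amult m f g = (\<lambda>w. \<Sum>x\<in>{x. f x \<noteq> 0}. \<Sum>y\<in>{y. g y \<noteq> 0}.
                     if wmult m x y = w then f x * g y else 0)"

definition astar :: "nat \<Rightarrow> (word \<Rightarrow> complex) \<Rightarrow> word \<Rightarrow> complex" where
  "astar m f = (\<lambda>w. cnj (f (winv m w)))"

definition apow :: "nat \<Rightarrow> (word \<Rightarrow> complex) \<Rightarrow> nat \<Rightarrow> word \<Rightarrow> complex" where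
  "apow m f k = (amult m f ^^ k) aone"

definition ugen :: "nat \<Rightarrow> nat \<Rightarrow> word \<Rightarrow> complex" where
  "ugen m v = delta (cons_red m (v, 1) [])"

definition omega :: "nat \<Rightarrow> complex" where
  "omega m = cis (2 * pi / real m)"

definition eproj :: "nat \<Rightarrow> nat \<Rightarrow> nat \<Rightarrow> word \<Rightarrow> complex" where
  "eproj m v a = ascale (1 / of_nat m)
     (\<lambda>w. \<Sum>k<m. apow m (ascale (inverse (omega m) ^ a) (ugen m v)) k w)"

definition lam_zero :: "graph \<Rightarrow> graph \<Rightarrow> nat \<Rightarrow> nat \<Rightarrow> nat \<Rightarrow> nat \<Rightarrow> bool" where
  "lam_zero G H v w a b \<longleftrightarrow>
     (v = w \<and> a \<noteq> b) \<or> (snd G v w \<and> \<not> snd H a b)"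

definition game_gens :: "graph \<Rightarrow> graph \<Rightarrow> (word \<Rightarrow> complex) set" where
  "game_gens G H = {amult (fst H) (eproj (fst H) v a) (eproj (fst H) w b) | v w a b.
      v < fst G \<and> w < fst G \<and> a < fst H \<and> b < fst H \<and> lam_zero G H v w a b}"

inductive_set star_ideal :: "nat \<Rightarrow> nat \<Rightarrow> (word \<Rightarrow> complex) set \<Rightarrow> (word \<Rightarrow> complex) set"
  for N m S where
  gen: "x \<in> S \<Longrightarrow> x \<in> star_ideal N m S"
| zero: "azero \<in> star_ideal N m S"
| add: "x \<in> star_ideal N m S \<Longrightarrow> y \<in> star_ideal N m S \<Longrightarrow> aadd x y \<in> star_ideal N m S"
| scale: "x \<in> star_ideal N m S \<Longrightarrow> ascale c x \<in> star_ideal N m S"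
| left: "a \<in> Alg N m \<Longrightarrow> x \<in> star_ideal N m S \<Longrightarrow> amult m a x \<in> star_ideal N m S"
| right: "a \<in> Alg N m \<Longrightarrow> x \<in> star_ideal N m S \<Longrightarrow> amult m x a \<in> star_ideal N m S"
| star: "x \<in> star_ideal N m S \<Longrightarrow> astar m x \<in> star_ideal N m S"

definition game_ideal :: "graph \<Rightarrow> graph \<Rightarrow> (word \<Rightarrow> complex) set" where
  "game_ideal G H = star_ideal (fst G) (fst H) (game_gens G H)"

inductive_set pos_cone :: "nat \<Rightarrow> nat \<Rightarrow> (word \<Rightarrow> complex) set" for N m where
  zero: "azero \<in> pos_cone N m"
| step: "f \<in> Alg N m \<Longrightarrow> g \<in> pos_cone N m \<Longrightarrow>
           aadd (amult m (astar m f) f) g \<in> pos_cone N m"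

definition selfadj :: "nat \<Rightarrow> (word \<Rightarrow> complex) \<Rightarrow> bool" where
  "selfadj m f \<longleftrightarrow> astar m f = f"

definition ale :: "nat \<Rightarrow> nat \<Rightarrow> (word \<Rightarrow> complex) \<Rightarrow> (word \<Rightarrow> complex) \<Rightarrow> bool" where
  "ale N m h k \<longleftrightarrow> selfadj m h \<and> selfadj m k \<and> asub k h \<in> pos_cone N m"

definition hereditary :: "nat \<Rightarrow> nat \<Rightarrow> (word \<Rightarrow> complex) set \<Rightarrow> bool" where
  "hereditary N m V \<longleftrightarrow>
     V \<subseteq> Alg N m \<and> azero \<in> V \<and>
     (\<forall>x\<in>V. \<forall>y\<in>V. aadd x y \<in> V) \<and> (\<forall>c. \<forall>x\<in>V. ascale c x \<in> V) \<and>
     (\<forall>x\<in>V. astar m x \<in> V) \<and>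
     (\<forall>f h. f \<in> Alg N m \<longrightarrow> ale N m azero f \<longrightarrow> ale N m f h \<longrightarrow> h \<in> V \<longrightarrow> f \<in> V)"

definition hered_ideal :: "graph \<Rightarrow> graph \<Rightarrow> (word \<Rightarrow> complex) set" where
  "hered_ideal G H = \<Inter> {V. hereditary (fst G) (fst H) V \<and> game_ideal G H \<subseteq> V}"

text \<open>A^h(G,H) = Alg / I^h(G,H) is nonzero iff I^h(G,H) is a proper subspace.\<close>
definition hered_hom :: "graph \<Rightarrow> graph \<Rightarrow> bool" where
  "hered_hom G H \<longleftrightarrow> hered_ideal G H \<noteq> Alg (fst G) (fst H)"

definition chi_hered :: "graph \<Rightarrow> nat" where
  "chi_hered G = (LEAST c. 1 \<le> c \<and> hered_hom G (K c))"

end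

theory Submission
  imports Defs
begin


definition Lw :: "nat \<Rightarrow> nat \<Rightarrow> nat \<Rightarrow> word" where
  "Lw m v k = cons_red m (v,k) []"

lemma Lw_simp: "Lw m v k = (if k mod m = 0 then [] else [(v, k mod m)])"
  by (simp add: Lw_def)

lemma reduced_Nil[simp]: "reduced N m []"
  by (simp add: reduced_def)

lemma reduced_Cons: "reduced N m (x # w) \<longleftrightarrow>
   fst x < N \<and> 0 < snd x \<and> snd x < m \<and> reduced N m w \<and> (w \<noteq> [] \<longrightarrow> fst x \<noteq> fst (hd w))"
proof -
  have "(\<forall>i. Suc i < length (x#w) \<longrightarrow> fst ((x#w) ! i) \<noteq> fst ((x#w) ! Suc i)) \<longleftrightarrow>
        (w \<noteq> [] \<longrightarrow> fst x \<noteq> fst (hd w)) \<and> (\<forall>i. Suc i < length w \<longrightarrow> fst (w ! i) \<noteq> fst (w ! Suc i))"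
    (is "?L \<longleftrightarrow> ?R")
  proof
    assume ?L
    show ?R
    proof
      show "w \<noteq> [] \<longrightarrow> fst x \<noteq> fst (hd w)" using spec[OF \<open>?L\<close>, of 0] by (cases w) auto
      show "\<forall>i. Suc i < length w \<longrightarrow> fst (w ! i) \<noteq> fst (w ! Suc i)"
        using \<open>?L\<close> by (metis Suc_less_eq length_Cons nth_Cons_Suc)
    qed
  next
    assume ?R
    show ?L
    proof (intro allI impI)
      fix i assume "Suc i < length (x#w)"
      then show "fst ((x#w) ! i) \<noteq> fst ((x#w) ! Suc i)"
        using \<open>?R\<close> by (cases i) (auto simp: hd_conv_nth)
    qed
  qed
  then show ?thesis by (auto simp: reduced_def split: prod.splits)
qed

lemma cons_red_mod: "cons_red m (v, k mod m) w = cons_red m (v, k) w"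
  by (cases w) (auto simp: mod_add_left_eq)

lemma cons_red_reduced:
  assumes "0 < m" "v < N" "reduced N m w"
  shows "reduced N m (cons_red m (v,k) w)"
proof (cases w)
  case Nil then show ?thesis using assms by (auto simp: reduced_Cons)
next
  case (Cons y w')
  obtain v' k' where y: "y = (v',k')" by (cases y)
  show ?thesis using assms unfolding Cons y
    by (auto simp: reduced_Cons)
qed

lemma wmult_Nil[simp]: "wmult m [] y = y" by (simp add: wmult_def)
lemma wmult_Cons[simp]: "wmult m (x # xs) y = cons_red m x (wmult m xs y)" by (simp add: wmult_def)

lemma wmult_reduced:
  "0 < m \<Longrightarrow> reduced N m x \<Longrightarrow> reduced N m y \<Longrightarrow> reduced N m (wmult m x y)"
proof (induction x)
  case Nil then show ?case by simp
next
  case (Cons a x)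
  obtain v k where a: "a = (v,k)" by (cases a)
  show ?case using Cons unfolding a by (auto simp: reduced_Cons simp del: cons_red.simps intro!: cons_red_reduced)
qed

lemma reduced_alt: "reduced N m w \<longleftrightarrow> (\<forall>x\<in>set w. fst x < N \<and> 0 < snd x \<and> snd x < m) \<and>
   successively (\<lambda>x y. fst x \<noteq> fst y) w"
proof (induction w)
  case Nil then show ?case by simp
next
  case (Cons a w)
  then show ?case by (cases w) (auto simp: reduced_Cons)
qed

lemma winv_Cons: "winv m (x # w) = winv m w @ [(fst x, m - snd x)]"
  by (simp add: winv_def split: prod.splits)

lemma winv_reduced: "reduced N m w \<Longrightarrow> reduced N m (winv m w)"
  unfolding reduced_alt winv_def
  by (auto simp: successively_rev successively_map split: prod.splits elim: successively_mono)

lemma winv_winv: "reduced N m w \<Longrightarrow> winv m (winv m w) = w"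
  unfolding winv_def reduced_alt
  by (auto simp: rev_map intro!: map_idI split: prod.splits)

lemma winv_winv': "reduced N m (winv m w) \<Longrightarrow> winv m (winv m w) = w"
  unfolding winv_def reduced_alt
  by (auto simp: rev_map intro!: map_idI split: prod.splits)

lemma reduced_winv_iff: "reduced N m (winv m w) \<Longrightarrow> reduced N m w"
  by (metis winv_reduced winv_winv')

lemma wmult_winv_self: "reduced N m w \<Longrightarrow> wmult m (winv m w) w = []"
proof (induction w)
  case Nil then show ?case by (simp add: winv_def)
next
  case (Cons a w)
  obtain v k where a: "a = (v,k)" by (cases a)
  have r: "reduced N m w" "0 < k" "k < m" using Cons.prems by (auto simp: a reduced_Cons)
  have "wmult m (winv m (a # w)) (a # w) = wmult m (winv m w) (cons_red m (v, m - k) ((v,k) # w))"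
    by (simp add: winv_Cons a wmult_def)
  also have "cons_red m (v, m - k) ((v,k) # w) = w" using r by auto
  finally show ?case using Cons r by simp
qed

lemma wmult_Nil_right: "reduced N m w \<Longrightarrow> wmult m w [] = w"
proof (induction w)
  case Nil then show ?case by simp
next
  case (Cons a w)
  obtain v k where a: "a = (v,k)" by (cases a)
  show ?case using Cons by (cases w) (auto simp: a reduced_Cons)
qed

lemma Lw_reduced: "0 < m \<Longrightarrow> v < N \<Longrightarrow> reduced N m (Lw m v k)"
  by (auto simp: Lw_simp reduced_Cons)

lemma wmult_Lw: "wmult m (Lw m v k) y = cons_red m (v,k) y"
  by (cases y) (auto simp: Lw_simp mod_add_left_eq)

lemma Lw_mod: "Lw m v (k mod m) = Lw m v k"
  by (simp add: Lw_simp)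

lemma Lw_add: "0 < m \<Longrightarrow> cons_red m (v,k) (Lw m v l) = Lw m v (k+l)"
  by (auto simp: Lw_simp mod_add_right_eq add.commute)

lemma winv_Lw: assumes "0 < m" shows "winv m (Lw m v j) = Lw m v (m - j mod m)"
proof -
  have "j mod m < m" using assms by simp
  then show ?thesis by (auto simp: Lw_simp winv_def)
qed

lemma mod_reflect_eq:
  fixes m k l :: nat
  assumes "0 < m" "k < m" "l < m"
  shows "(m - (k + l) mod m) mod m = ((m - l) + (m - k)) mod m"
proof (cases "k + l < m")
  case True
  then have "(m - l) + (m - k) = (m - (k+l)) + m" using assms by linarith
  then show ?thesis using True by (simp only: mod_add_self2 mod_less)
next
  case False
  then have e: "(k+l) mod m = k + l - m" using assms by (simp add: le_mod_geq)
  have "(m - l) + (m - k) = m - (k + l - m)" using False assms by arith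
  then show ?thesis using e by simp
qed

lemma winv_wmult_Lw:
  assumes "0 < m" "k < m" "l < m"
  shows "winv m (wmult m (Lw m v k) (Lw m w l)) = wmult m (winv m (Lw m w l)) (winv m (Lw m v k))"
proof (cases "v = w")
  case True
  have "winv m (wmult m (Lw m v k) (Lw m w l)) = Lw m v ((m - (k + l) mod m) mod m)"
    using assms True by (simp add: wmult_Lw Lw_add winv_Lw Lw_mod del: cons_red.simps)
  also have "\<dots> = Lw m v (((m - l) + (m - k)) mod m)" using mod_reflect_eq[OF assms] by simp
  also have "\<dots> = wmult m (winv m (Lw m w l)) (winv m (Lw m v k))"
    using assms True by (simp add: wmult_Lw Lw_add winv_Lw Lw_mod del: cons_red.simps)
  finally show ?thesis .
next
  case False
  show ?thesis
    using assms False by (auto simp: Lw_simp winv_def)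
qed



definition spt :: "(word \<Rightarrow> complex) \<Rightarrow> word set" where "spt f = {w. f w \<noteq> 0}"

definition asum :: "'i set \<Rightarrow> ('i \<Rightarrow> word \<Rightarrow> complex) \<Rightarrow> word \<Rightarrow> complex" where
  "asum I f = (\<lambda>w. \<Sum>i\<in>I. f i w)"

definition lc :: "'i set \<Rightarrow> ('i \<Rightarrow> complex) \<Rightarrow> ('i \<Rightarrow> word) \<Rightarrow> word \<Rightarrow> complex" where
  "lc I c x = (\<lambda>w. \<Sum>i\<in>I. if x i = w then c i else 0)"

lemma amult_eq:
  assumes "finite A" "finite B" "spt f \<subseteq> A" "spt g \<subseteq> B"
  shows "amult m f g w = (\<Sum>x\<in>A. \<Sum>y\<in>B. if wmult m x y = w then f x * g y else 0)"
proof -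
  have "amult m f g w = (\<Sum>x\<in>spt f. \<Sum>y\<in>spt g. if wmult m x y = w then f x * g y else 0)"
    by (simp add: amult_def spt_def)
  also have "\<dots> = (\<Sum>x\<in>A. \<Sum>y\<in>spt g. if wmult m x y = w then f x * g y else 0)"
  proof (rule sum.mono_neutral_left)
    show "\<forall>i\<in>A - spt f. (\<Sum>y\<in>spt g. if wmult m i y = w then f i * g y else 0) = 0"
    proof
      fix i assume "i \<in> A - spt f"
      then have "f i = 0" by (simp add: spt_def)
      then show "(\<Sum>y\<in>spt g. if wmult m i y = w then f i * g y else 0) = 0"
        by (intro sum.neutral) simp
    qed
  qed (use assms in auto)
  also have "\<dots> = (\<Sum>x\<in>A. \<Sum>y\<in>B. if wmult m x y = w then f x * g y else 0)"
    by (intro sum.cong refl sum.mono_neutral_left) (use assms in \<open>auto simp: spt_def\<close>)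
  finally show ?thesis .
qed

lemma spt_lc: "spt (lc I c x) \<subseteq> x ` I"
proof
  fix w assume "w \<in> spt (lc I c x)"
  then have "(\<Sum>i\<in>I. if x i = w then c i else 0) \<noteq> 0" by (simp add: spt_def lc_def)
  then obtain i where "i \<in> I" "(if x i = w then c i else 0) \<noteq> 0"
    by (rule sum.not_neutral_contains_not_neutral)
  then have "i \<in> I" "x i = w" by (auto split: if_splits)
  then show "w \<in> x ` I" by auto
qed

lemma lc_mult_pt: "lc I c x a * lc J d y b =
   (\<Sum>i\<in>I. \<Sum>j\<in>J. if a = x i \<and> b = y j then c i * d j else 0)"
  by (auto simp: lc_def sum_product intro!: sum.cong)

lemma swap4: "(\<Sum>a\<in>A. \<Sum>b\<in>B. \<Sum>i\<in>I. \<Sum>j\<in>J. G a b i j) =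
   (\<Sum>i\<in>I. \<Sum>j\<in>J. \<Sum>a\<in>A. \<Sum>b\<in>B. G a b i j)"
proof -
  have "(\<Sum>a\<in>A. \<Sum>b\<in>B. \<Sum>i\<in>I. \<Sum>j\<in>J. G a b i j) = (\<Sum>a\<in>A. \<Sum>i\<in>I. \<Sum>b\<in>B. \<Sum>j\<in>J. G a b i j)"
    by (rule sum.cong[OF refl], rule sum.swap)
  also have "\<dots> = (\<Sum>a\<in>A. \<Sum>i\<in>I. \<Sum>j\<in>J. \<Sum>b\<in>B. G a b i j)"
    by (rule sum.cong[OF refl], rule sum.cong[OF refl], rule sum.swap)
  also have "\<dots> = (\<Sum>i\<in>I. \<Sum>a\<in>A. \<Sum>j\<in>J. \<Sum>b\<in>B. G a b i j)"
    by (rule sum.swap)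
  also have "\<dots> = (\<Sum>i\<in>I. \<Sum>j\<in>J. \<Sum>a\<in>A. \<Sum>b\<in>B. G a b i j)"
    by (rule sum.cong[OF refl], rule sum.swap)
  finally show ?thesis .
qed

lemma fs_lc: "finite I \<Longrightarrow> finite (spt (lc I c x))"
  by (rule finite_subset[OF spt_lc]) simp

lemma sum_sum_delta:
  assumes "finite A" "finite B" "a \<in> A" "b \<in> B"
  shows "(\<Sum>x\<in>A. \<Sum>y\<in>B. if x = a \<and> y = b then F x y else 0) = (F a b :: complex)"
proof -
  have "(\<Sum>x\<in>A. \<Sum>y\<in>B. if x = a \<and> y = b then F x y else 0) =
        (\<Sum>x\<in>A. if x = a then (\<Sum>y\<in>B. if y = b then F x y else 0) else 0)"
    by (intro sum.cong refl) auto
  also have "\<dots> = F a b" using assms by simp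
  finally show ?thesis .
qed

lemma amult_lc:
  assumes "finite I" "finite J"
  shows "amult m (lc I c x) (lc J d y) =
     lc (I \<times> J) (\<lambda>p. c (fst p) * d (snd p)) (\<lambda>p. wmult m (x (fst p)) (y (snd p)))"
proof (rule ext)
  fix w
  have "amult m (lc I c x) (lc J d y) w =
     (\<Sum>a\<in>x`I. \<Sum>b\<in>y`J. if wmult m a b = w then lc I c x a * lc J d y b else 0)"
    by (rule amult_eq) (use assms spt_lc[of I c x] spt_lc[of J d y] in auto)
  also have "\<dots> = (\<Sum>a\<in>x`I. \<Sum>b\<in>y`J. \<Sum>i\<in>I. \<Sum>j\<in>J.
      if a = x i \<and> b = y j then (if wmult m a b = w then c i * d j else 0) else 0)"
    unfolding lc_mult_pt
    apply (intro sum.cong refl)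
    subgoal for a b by (cases "wmult m a b = w") (auto intro!: sum.cong sum.neutral)
    done
  also have "\<dots> = (\<Sum>i\<in>I. \<Sum>j\<in>J. \<Sum>a\<in>x`I. \<Sum>b\<in>y`J.
      if a = x i \<and> b = y j then (if wmult m a b = w then c i * d j else 0) else 0)"
    by (rule swap4)
  also have "\<dots> = (\<Sum>i\<in>I. \<Sum>j\<in>J. if wmult m (x i) (y j) = w then c i * d j else 0)"
    by (intro sum.cong refl, subst sum_sum_delta) (use assms in auto)
  also have "\<dots> = lc (I \<times> J) (\<lambda>p. c (fst p) * d (snd p)) (\<lambda>p. wmult m (x (fst p)) (y (snd p))) w"
    by (simp add: lc_def sum.cartesian_product split_beta)
  finally show "amult m (lc I c x) (lc J d y) w = lc (I \<times> J) (\<lambda>p. c (fst p) * d (snd p)) (\<lambda>p. wmult m (x (fst p)) (y (snd p))) w" .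
qed



lemma spt_aadd: "spt (aadd f g) \<subseteq> spt f \<union> spt g" by (auto simp: spt_def aadd_def)
lemma spt_asub: "spt (asub f g) \<subseteq> spt f \<union> spt g" by (auto simp: spt_def asub_def)
lemma spt_ascale: "spt (ascale c f) \<subseteq> spt f" by (auto simp: spt_def ascale_def)
lemma spt_asum: "spt (asum I f) \<subseteq> (\<Union>i\<in>I. spt (f i))"
proof
  fix w assume "w \<in> spt (asum I f)"
  then have "(\<Sum>i\<in>I. f i w) \<noteq> 0" by (simp add: spt_def asum_def)
  then obtain i where "i \<in> I" "f i w \<noteq> 0" by (rule sum.not_neutral_contains_not_neutral)
  then show "w \<in> (\<Union>i\<in>I. spt (f i))" by (auto simp: spt_def)
qed
lemma spt_delta: "spt (delta x) = {x}" by (auto simp: spt_def delta_def)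
lemma spt_zero: "spt azero = {}" by (auto simp: spt_def azero_def)
lemma aone_delta: "aone = delta []" by (simp add: aone_def delta_def fun_eq_iff)

lemma fs_aadd: "finite (spt f) \<Longrightarrow> finite (spt g) \<Longrightarrow> finite (spt (aadd f g))"
  by (rule finite_subset[OF spt_aadd]) simp
lemma fs_asub: "finite (spt f) \<Longrightarrow> finite (spt g) \<Longrightarrow> finite (spt (asub f g))"
  by (rule finite_subset[OF spt_asub]) simp
lemma fs_ascale: "finite (spt f) \<Longrightarrow> finite (spt (ascale c f))"
  by (rule finite_subset[OF spt_ascale])
lemma fs_asum: "finite I \<Longrightarrow> (\<And>i. i \<in> I \<Longrightarrow> finite (spt (f i))) \<Longrightarrow> finite (spt (asum I f))"
  by (rule finite_subset[OF spt_asum]) auto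
lemma fs_delta: "finite (spt (delta x))" by (simp add: spt_delta)
lemma fs_aone: "finite (spt aone)" by (simp add: spt_delta aone_delta)
lemma fs_zero: "finite (spt azero)" by (simp add: spt_zero)

lemma spt_amult: "spt (amult m f g) \<subseteq> (\<lambda>p. wmult m (fst p) (snd p)) ` (spt f \<times> spt g)"
proof
  fix w assume "w \<in> spt (amult m f g)"
  then have "(\<Sum>x\<in>spt f. \<Sum>y\<in>spt g. if wmult m x y = w then f x * g y else 0) \<noteq> 0"
    by (simp add: spt_def amult_def)
  then obtain x where x: "x \<in> spt f" "(\<Sum>y\<in>spt g. if wmult m x y = w then f x * g y else 0) \<noteq> 0"
    by (rule sum.not_neutral_contains_not_neutral)
  from x(2) obtain y where "y \<in> spt g" "(if wmult m x y = w then f x * g y else 0) \<noteq> 0"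
    by (rule sum.not_neutral_contains_not_neutral)
  then have "y \<in> spt g" "wmult m x y = w" by (auto split: if_splits)
  with x have "x \<in> spt f" "y \<in> spt g" "wmult m x y = w" by auto
  then show "w \<in> (\<lambda>p. wmult m (fst p) (snd p)) ` (spt f \<times> spt g)" by force
qed

lemma fs_amult: "finite (spt f) \<Longrightarrow> finite (spt g) \<Longrightarrow> finite (spt (amult m f g))"
  by (rule finite_subset[OF spt_amult]) simp

lemmas fs_intros = fs_aadd fs_asub fs_ascale fs_asum fs_delta fs_aone fs_zero fs_amult fs_lc

lemma if_add0: "(if c then a + b else 0) = (if c then a else 0) + (if c then b else (0::complex))" by simp
lemma if_sub0: "(if c then a - b else 0) = (if c then a else 0) - (if c then b else (0::complex))" by simp

lemma amult_aadd_left: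
  assumes "finite (spt f1)" "finite (spt f2)" "finite (spt g)"
  shows "amult m (aadd f1 f2) g = aadd (amult m f1 g) (amult m f2 g)"
proof (rule ext)
  fix w
  let ?A = "spt f1 \<union> spt f2" and ?B = "spt g"
  have 1: "amult m (aadd f1 f2) g w = (\<Sum>x\<in>?A. \<Sum>y\<in>?B. if wmult m x y = w then aadd f1 f2 x * g y else 0)"
    by (rule amult_eq) (use assms spt_aadd in auto)
  have 2: "amult m f1 g w = (\<Sum>x\<in>?A. \<Sum>y\<in>?B. if wmult m x y = w then f1 x * g y else 0)"
    by (rule amult_eq) (use assms in auto)
  have 3: "amult m f2 g w = (\<Sum>x\<in>?A. \<Sum>y\<in>?B. if wmult m x y = w then f2 x * g y else 0)"
    by (rule amult_eq) (use assms in auto)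
  show "amult m (aadd f1 f2) g w = aadd (amult m f1 g) (amult m f2 g) w"
    unfolding 1 unfolding aadd_def 2 3 by (simp only: distrib_right if_add0 sum.distrib)
qed

lemma amult_aadd_right:
  assumes "finite (spt f)" "finite (spt g1)" "finite (spt g2)"
  shows "amult m f (aadd g1 g2) = aadd (amult m f g1) (amult m f g2)"
proof (rule ext)
  fix w
  let ?A = "spt f" and ?B = "spt g1 \<union> spt g2"
  have 1: "amult m f (aadd g1 g2) w = (\<Sum>x\<in>?A. \<Sum>y\<in>?B. if wmult m x y = w then f x * aadd g1 g2 y else 0)"
    by (rule amult_eq) (use assms spt_aadd in auto)
  have 2: "amult m f g1 w = (\<Sum>x\<in>?A. \<Sum>y\<in>?B. if wmult m x y = w then f x * g1 y else 0)"
    by (rule amult_eq) (use assms in auto)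
  have 3: "amult m f g2 w = (\<Sum>x\<in>?A. \<Sum>y\<in>?B. if wmult m x y = w then f x * g2 y else 0)"
    by (rule amult_eq) (use assms in auto)
  show "amult m f (aadd g1 g2) w = aadd (amult m f g1) (amult m f g2) w"
    unfolding 1 unfolding aadd_def 2 3 by (simp only: distrib_left if_add0 sum.distrib)
qed

lemma amult_asub_left:
  assumes "finite (spt f1)" "finite (spt f2)" "finite (spt g)"
  shows "amult m (asub f1 f2) g = asub (amult m f1 g) (amult m f2 g)"
proof (rule ext)
  fix w
  let ?A = "spt f1 \<union> spt f2" and ?B = "spt g"
  have 1: "amult m (asub f1 f2) g w = (\<Sum>x\<in>?A. \<Sum>y\<in>?B. if wmult m x y = w then asub f1 f2 x * g y else 0)"
    by (rule amult_eq) (use assms spt_asub in auto)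
  have 2: "amult m f1 g w = (\<Sum>x\<in>?A. \<Sum>y\<in>?B. if wmult m x y = w then f1 x * g y else 0)"
    by (rule amult_eq) (use assms in auto)
  have 3: "amult m f2 g w = (\<Sum>x\<in>?A. \<Sum>y\<in>?B. if wmult m x y = w then f2 x * g y else 0)"
    by (rule amult_eq) (use assms in auto)
  show "amult m (asub f1 f2) g w = asub (amult m f1 g) (amult m f2 g) w"
    unfolding 1 unfolding asub_def 2 3 by (simp only: left_diff_distrib if_sub0 sum_subtractf)
qed

lemma amult_asub_right:
  assumes "finite (spt f)" "finite (spt g1)" "finite (spt g2)"
  shows "amult m f (asub g1 g2) = asub (amult m f g1) (amult m f g2)"
proof (rule ext)
  fix w
  let ?A = "spt f" and ?B = "spt g1 \<union> spt g2"
  have 1: "amult m f (asub g1 g2) w = (\<Sum>x\<in>?A. \<Sum>y\<in>?B. if wmult m x y = w then f x * asub g1 g2 y else 0)"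
    by (rule amult_eq) (use assms spt_asub in auto)
  have 2: "amult m f g1 w = (\<Sum>x\<in>?A. \<Sum>y\<in>?B. if wmult m x y = w then f x * g1 y else 0)"
    by (rule amult_eq) (use assms in auto)
  have 3: "amult m f g2 w = (\<Sum>x\<in>?A. \<Sum>y\<in>?B. if wmult m x y = w then f x * g2 y else 0)"
    by (rule amult_eq) (use assms in auto)
  show "amult m f (asub g1 g2) w = asub (amult m f g1) (amult m f g2) w"
    unfolding 1 unfolding asub_def 2 3 by (simp only: right_diff_distrib if_sub0 sum_subtractf)
qed

lemma amult_ascale_left:
  assumes "finite (spt f)" "finite (spt g)"
  shows "amult m (ascale c f) g = ascale c (amult m f g)"
proof (rule ext)
  fix w
  have 1: "amult m (ascale c f) g w = (\<Sum>x\<in>spt f. \<Sum>y\<in>spt g. if wmult m x y = w then ascale c f x * g y else 0)"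
    by (rule amult_eq) (use assms spt_ascale in auto)
  have 2: "amult m f g w = (\<Sum>x\<in>spt f. \<Sum>y\<in>spt g. if wmult m x y = w then f x * g y else 0)"
    by (rule amult_eq) (use assms in auto)
  show "amult m (ascale c f) g w = ascale c (amult m f g) w"
    unfolding 1 unfolding ascale_def 2 by (simp add: sum_distrib_left if_distrib mult.assoc cong: if_cong)
qed

lemma amult_ascale_right:
  assumes "finite (spt f)" "finite (spt g)"
  shows "amult m f (ascale c g) = ascale c (amult m f g)"
proof (rule ext)
  fix w
  have 1: "amult m f (ascale c g) w = (\<Sum>x\<in>spt f. \<Sum>y\<in>spt g. if wmult m x y = w then f x * ascale c g y else 0)"
    by (rule amult_eq) (use assms spt_ascale in auto)
  have 2: "amult m f g w = (\<Sum>x\<in>spt f. \<Sum>y\<in>spt g. if wmult m x y = w then f x * g y else 0)"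
    by (rule amult_eq) (use assms in auto)
  show "amult m f (ascale c g) w = ascale c (amult m f g) w"
    unfolding 1 unfolding ascale_def 2 by (simp add: sum_distrib_left if_distrib mult.left_commute cong: if_cong)
qed

lemma amult_asum_left:
  assumes "finite I" "\<And>i. i \<in> I \<Longrightarrow> finite (spt (f i))" "finite (spt g)"
  shows "amult m (asum I f) g = asum I (\<lambda>i. amult m (f i) g)"
proof (rule ext)
  fix w
  let ?A = "\<Union>i\<in>I. spt (f i)" and ?B = "spt g"
  have fA: "finite ?A" using assms by auto
  have 1: "amult m (asum I f) g w = (\<Sum>x\<in>?A. \<Sum>y\<in>?B. if wmult m x y = w then asum I f x * g y else 0)"
    by (rule amult_eq) (use assms fA spt_asum[of I f] in auto)
  have 2: "amult m (f i) g w = (\<Sum>x\<in>?A. \<Sum>y\<in>?B. if wmult m x y = w then f i x * g y else 0)" if "i \<in> I" for i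
    by (rule amult_eq) (use assms fA that in auto)
  have "(\<Sum>x\<in>?A. \<Sum>y\<in>?B. if wmult m x y = w then asum I f x * g y else 0) =
        (\<Sum>x\<in>?A. \<Sum>y\<in>?B. \<Sum>i\<in>I. if wmult m x y = w then f i x * g y else 0)"
    by (intro sum.cong refl) (simp add: asum_def sum_distrib_right)
  also have "\<dots> = (\<Sum>i\<in>I. \<Sum>x\<in>?A. \<Sum>y\<in>?B. if wmult m x y = w then f i x * g y else 0)"
    by (simp only: sum.swap[of _ I])
  finally have L: "amult m (asum I f) g w = (\<Sum>i\<in>I. \<Sum>x\<in>?A. \<Sum>y\<in>?B. if wmult m x y = w then f i x * g y else 0)"
    by (rule trans[OF 1])
  have R: "asum I (\<lambda>i. amult m (f i) g) w = (\<Sum>i\<in>I. \<Sum>x\<in>?A. \<Sum>y\<in>?B. if wmult m x y = w then f i x * g y else 0)"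
    unfolding asum_def by (rule sum.cong[OF refl]) (rule 2)
  show "amult m (asum I f) g w = asum I (\<lambda>i. amult m (f i) g) w"
    by (rule trans[OF L R[symmetric]])
qed

lemma amult_asum_right:
  assumes "finite I" "\<And>i. i \<in> I \<Longrightarrow> finite (spt (g i))" "finite (spt f)"
  shows "amult m f (asum I g) = asum I (\<lambda>i. amult m f (g i))"
proof (rule ext)
  fix w
  let ?A = "spt f" and ?B = "\<Union>i\<in>I. spt (g i)"
  have fB: "finite ?B" using assms by auto
  have 1: "amult m f (asum I g) w = (\<Sum>x\<in>?A. \<Sum>y\<in>?B. if wmult m x y = w then f x * asum I g y else 0)"
    by (rule amult_eq) (use assms fB spt_asum[of I g] in auto)
  have 2: "amult m f (g i) w = (\<Sum>x\<in>?A. \<Sum>y\<in>?B. if wmult m x y = w then f x * g i y else 0)" if "i \<in> I" for i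
    by (rule amult_eq) (use assms fB that in auto)
  have "(\<Sum>x\<in>?A. \<Sum>y\<in>?B. if wmult m x y = w then f x * asum I g y else 0) =
        (\<Sum>x\<in>?A. \<Sum>y\<in>?B. \<Sum>i\<in>I. if wmult m x y = w then f x * g i y else 0)"
    by (intro sum.cong refl) (simp add: asum_def sum_distrib_left)
  also have "\<dots> = (\<Sum>x\<in>?A. \<Sum>i\<in>I. \<Sum>y\<in>?B. if wmult m x y = w then f x * g i y else 0)"
    by (rule sum.cong[OF refl], rule sum.swap)
  also have "\<dots> = (\<Sum>i\<in>I. \<Sum>x\<in>?A. \<Sum>y\<in>?B. if wmult m x y = w then f x * g i y else 0)"
    by (rule sum.swap)
  finally have L: "amult m f (asum I g) w = (\<Sum>i\<in>I. \<Sum>x\<in>?A. \<Sum>y\<in>?B. if wmult m x y = w then f x * g i y else 0)"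
    by (rule trans[OF 1])
  have R: "asum I (\<lambda>i. amult m f (g i)) w = (\<Sum>i\<in>I. \<Sum>x\<in>?A. \<Sum>y\<in>?B. if wmult m x y = w then f x * g i y else 0)"
    unfolding asum_def by (rule sum.cong[OF refl]) (rule 2)
  show "amult m f (asum I g) w = asum I (\<lambda>i. amult m f (g i)) w"
    by (rule trans[OF L R[symmetric]])
qed

lemma amult_delta: "amult m (delta x) (delta y) = delta (wmult m x y)"
proof (rule ext)
  fix w
  have "amult m (delta x) (delta y) w = (\<Sum>a\<in>{x}. \<Sum>b\<in>{y}. if wmult m a b = w then delta x a * delta y b else 0)"
    by (rule amult_eq) (auto simp: spt_delta)
  then show "amult m (delta x) (delta y) w = delta (wmult m x y) w" by (simp add: delta_def)
qed



lemma astar_aadd: "astar m (aadd f g) = aadd (astar m f) (astar m g)"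
  by (simp add: astar_def aadd_def fun_eq_iff)
lemma astar_asub: "astar m (asub f g) = asub (astar m f) (astar m g)"
  by (simp add: astar_def asub_def fun_eq_iff)
lemma astar_ascale: "astar m (ascale c f) = ascale (cnj c) (astar m f)"
  by (simp add: astar_def ascale_def fun_eq_iff)
lemma astar_asum: "astar m (asum I f) = asum I (\<lambda>i. astar m (f i))"
  by (simp add: astar_def asum_def fun_eq_iff)
lemma astar_zero: "astar m azero = azero"
  by (simp add: astar_def azero_def fun_eq_iff)

lemma winv_eq_iff:
  assumes "reduced N m x"
  shows "winv m w = x \<longleftrightarrow> w = winv m x"
proof
  assume "winv m w = x"
  then have "reduced N m (winv m w)" using assms by simp
  then have "winv m (winv m w) = w" by (rule winv_winv')
  then show "w = winv m x" using \<open>winv m w = x\<close> by simp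
next
  assume "w = winv m x" then show "winv m w = x" using winv_winv[OF assms] by simp
qed

lemma astar_delta: "reduced N m x \<Longrightarrow> astar m (delta x) = delta (winv m x)"
  by (auto simp: astar_def delta_def fun_eq_iff winv_eq_iff)

lemma astar_aone: "astar m aone = aone"
  by (simp add: aone_delta astar_delta[of 0] winv_def)

lemma astar_lc:
  assumes "\<And>i. i \<in> I \<Longrightarrow> reduced N m (x i)"
  shows "astar m (lc I c x) = lc I (\<lambda>i. cnj (c i)) (\<lambda>i. winv m (x i))"
proof (rule ext)
  fix w
  have "astar m (lc I c x) w = (\<Sum>i\<in>I. cnj (if x i = winv m w then c i else 0))"
    by (simp add: astar_def lc_def)
  also have "\<dots> = (\<Sum>i\<in>I. if winv m (x i) = w then cnj (c i) else 0)"
  proof (rule sum.cong[OF refl])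
    fix i assume "i \<in> I"
    then have "x i = winv m w \<longleftrightarrow> winv m (x i) = w"
      using winv_eq_iff[OF assms[of i], of w] by auto
    then show "cnj (if x i = winv m w then c i else 0) = (if winv m (x i) = w then cnj (c i) else 0)"
      by simp
  qed
  finally show "astar m (lc I c x) w = lc I (\<lambda>i. cnj (c i)) (\<lambda>i. winv m (x i)) w"
    by (simp add: lc_def)
qed

lemma Alg_iff: "f \<in> Alg N m \<longleftrightarrow> finite (spt f) \<and> (\<forall>w\<in>spt f. reduced N m w)"
  by (simp add: Alg_def spt_def)

lemma Alg_aadd: "f \<in> Alg N m \<Longrightarrow> g \<in> Alg N m \<Longrightarrow> aadd f g \<in> Alg N m"
  unfolding Alg_iff using spt_aadd[of f g] fs_aadd by blast
lemma Alg_asub: "f \<in> Alg N m \<Longrightarrow> g \<in> Alg N m \<Longrightarrow> asub f g \<in> Alg N m"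
  unfolding Alg_iff using spt_asub[of f g] fs_asub by blast
lemma Alg_ascale: "f \<in> Alg N m \<Longrightarrow> ascale c f \<in> Alg N m"
  unfolding Alg_iff using spt_ascale[of c f] fs_ascale by blast
lemma Alg_asum: "finite I \<Longrightarrow> (\<And>i. i \<in> I \<Longrightarrow> f i \<in> Alg N m) \<Longrightarrow> asum I f \<in> Alg N m"
  unfolding Alg_iff using spt_asum[of I f] fs_asum[of I f] by blast
lemma Alg_zero: "azero \<in> Alg N m"
  by (simp add: Alg_iff spt_zero)
lemma Alg_delta: "reduced N m x \<Longrightarrow> delta x \<in> Alg N m"
  by (simp add: Alg_iff spt_delta)
lemma Alg_aone: "aone \<in> Alg N m"
  by (simp add: aone_delta Alg_delta)
lemma Alg_lc: "finite I \<Longrightarrow> (\<And>i. i \<in> I \<Longrightarrow> reduced N m (x i)) \<Longrightarrow> lc I c x \<in> Alg N m"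
  unfolding Alg_iff using spt_lc[of I c x] fs_lc[of I c x] by blast
lemma Alg_amult: "0 < m \<Longrightarrow> f \<in> Alg N m \<Longrightarrow> g \<in> Alg N m \<Longrightarrow> amult m f g \<in> Alg N m"
  unfolding Alg_iff using spt_amult[of m f g] fs_amult[of f g m] wmult_reduced[of m N] by fastforce

lemma spt_astar: "f \<in> Alg N m \<Longrightarrow> spt (astar m f) \<subseteq> winv m ` spt f"
proof
  fix w assume f: "f \<in> Alg N m" and "w \<in> spt (astar m f)"
  then have "winv m w \<in> spt f" by (simp add: spt_def astar_def)
  then have "reduced N m (winv m w)" using f by (simp add: Alg_iff)
  then have "w = winv m (winv m w)" by (simp add: winv_winv')
  then show "w \<in> winv m ` spt f" using \<open>winv m w \<in> spt f\<close> by blast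
qed

lemma Alg_astar: "f \<in> Alg N m \<Longrightarrow> astar m f \<in> Alg N m"
proof -
  assume f: "f \<in> Alg N m"
  have "finite (spt (astar m f))"
    by (rule finite_subset[OF spt_astar[OF f]]) (use f in \<open>simp add: Alg_iff\<close>)
  moreover have "reduced N m w" if "w \<in> spt (astar m f)" for w
  proof -
    have "winv m w \<in> spt f" using that by (simp add: spt_def astar_def)
    then have "reduced N m (winv m w)" using f by (simp add: Alg_iff)
    then show ?thesis by (rule reduced_winv_iff)
  qed
  ultimately show ?thesis by (simp add: Alg_iff)
qed

lemma astar_astar: "f \<in> Alg N m \<Longrightarrow> astar m (astar m f) = f"
proof (rule ext)
  fix w assume f: "f \<in> Alg N m"
  show "astar m (astar m f) w = f w"
  proof (cases "reduced N m w")
    case True then show ?thesis by (simp add: astar_def winv_winv)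
  next
    case False
    then have "f w = 0" using f by (auto simp: Alg_iff spt_def)
    moreover have "f (winv m (winv m w)) = 0"
    proof (rule ccontr)
      assume "f (winv m (winv m w)) \<noteq> 0"
      then have "reduced N m (winv m (winv m w))" using f by (auto simp: Alg_iff spt_def)
      then have "reduced N m w" by (meson reduced_winv_iff)
      then show False using False by simp
    qed
    ultimately show ?thesis by (simp add: astar_def)
  qed
qed

lemma aone_Nil[simp]: "aone [] = 1" by (simp add: aone_def)

lemma amult_one_left: "finite (spt g) \<Longrightarrow> amult m aone g = g"
proof (rule ext)
  fix w assume g: "finite (spt g)"
  have "amult m aone g w = (\<Sum>x\<in>{[]}. \<Sum>y\<in>spt g. if wmult m x y = w then aone x * g y else 0)"
    by (rule amult_eq) (use g in \<open>auto simp: aone_delta spt_delta\<close>)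
  also have "\<dots> = (\<Sum>y\<in>spt g. if y = w then g y else 0)" by (simp only: sum.insert_if sum.empty finite.emptyI empty_iff if_False add_0_right wmult_Nil aone_Nil mult.left_neutral)
  also have "\<dots> = g w" using g by (simp add: spt_def)
  finally show "amult m aone g w = g w" .
qed

lemma amult_one_right: "g \<in> Alg N m \<Longrightarrow> amult m g aone = g"
proof (rule ext)
  fix w assume g: "g \<in> Alg N m"
  have "amult m g aone w = (\<Sum>x\<in>spt g. \<Sum>y\<in>{[]}. if wmult m x y = w then g x * aone y else 0)"
    by (rule amult_eq) (use g in \<open>auto simp: aone_delta spt_delta Alg_iff\<close>)
  also have "\<dots> = (\<Sum>x\<in>spt g. if x = w then g x else 0)"
    by (rule sum.cong[OF refl]) (use g in \<open>auto simp: aone_def Alg_iff wmult_Nil_right\<close>)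
  also have "\<dots> = g w" using g by (simp add: spt_def Alg_iff)
  finally show "amult m g aone w = g w" .
qed



definition zz :: "nat \<Rightarrow> nat \<Rightarrow> complex" where "zz m a = inverse (omega m) ^ a"

lemma omega_pow: "omega m ^ j = cis (real j * (2 * pi / real m))"
  by (simp add: omega_def DeMoivre)

lemma omega_pow_m: "0 < m \<Longrightarrow> omega m ^ m = 1"
  by (simp add: omega_pow)

lemma norm_omega: "cmod (omega m) = 1"
  by (simp add: omega_def)

lemma omega_nz: "omega m \<noteq> 0"
  using norm_omega[of m] by auto

lemma omega_pow_pow_m: "0 < m \<Longrightarrow> (omega m ^ x) ^ m = 1"
  by (metis power_mult mult.commute omega_pow_m power_one)

lemma omega_pow_ne1:
  assumes "0 < j" "j < m"
  shows "omega m ^ j \<noteq> 1"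
proof
  assume "omega m ^ j = 1"
  then have "Re (cis (real j * (2 * pi / real m))) = 1"
    unfolding omega_pow by simp
  then have "cos (real j * (2 * pi / real m)) = 1" by simp
  then obtain k :: int where k: "real j * (2 * pi / real m) = real_of_int k * 2 * pi"
    by (auto simp: cos_one_2pi_int)
  have m0: "real m > 0" using assms by simp
  from k have "real j = real_of_int k * real m" using m0 by (simp add: field_simps)
  then have "int j = k * int m" by (metis of_int_eq_iff of_int_mult of_int_of_nat_eq)
  moreover have "0 < int j" "int j < int m" using assms by auto
  ultimately show False
  proof (cases "k \<le> 0")
    case True
    then have "k * int m \<le> 0" by (simp add: mult_nonpos_nonneg)
    then show False using \<open>int j = k * int m\<close> \<open>0 < int j\<close> by linarith
  next
    case False
    then have "1 * int m \<le> k * int m" by (intro mult_right_mono) auto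
    then show False using \<open>int j = k * int m\<close> \<open>int j < int m\<close> by linarith
  qed
qed

lemma pow_mod_eq: fixes y :: complex assumes "y ^ m = 1" shows "y ^ j = y ^ (j mod m)"
proof -
  have "y ^ j = y ^ (m * (j div m) + j mod m)" by simp
  also have "\<dots> = (y ^ m) ^ (j div m) * y ^ (j mod m)" by (simp only: power_add power_mult)
  finally show ?thesis using assms by simp
qed

lemma sum_roots:
  fixes y :: complex
  assumes "y ^ m = 1"
  shows "(\<Sum>a<m. y ^ a) = (if y = 1 then of_nat m else 0)"
  using assms by (simp add: sum_gp_strict)

lemma cnj_unit: fixes z :: complex assumes "cmod z = 1" shows "cnj z = inverse z"
proof -
  have "z * cnj z = 1" using complex_norm_square[of z] assms by simp
  then show ?thesis by (metis inverse_unique)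
qed

lemma zz_pow_m': assumes "0 < m" shows "zz m a ^ m = 1"
proof -
  have "zz m a ^ m = inverse ((omega m ^ m) ^ a)"
    by (simp add: zz_def power_inverse flip: power_mult) (simp add: mult.commute)
  then show ?thesis using omega_pow_m[OF assms] by simp
qed

lemma norm_zz: "cmod (zz m a) = 1"
  by (simp add: zz_def norm_power norm_inverse norm_omega)

lemma cnj_zz_pow:
  assumes "0 < m" "k \<le> m"
  shows "cnj (zz m a ^ k) = zz m a ^ (m - k)"
proof -
  have c: "cnj (zz m a) = inverse (zz m a)" by (rule cnj_unit[OF norm_zz])
  have "zz m a ^ (m - k) * zz m a ^ k = 1" using zz_pow_m'[OF assms(1)] assms(2)
    by (simp flip: power_add)
  then have "zz m a ^ (m - k) = inverse (zz m a ^ k)" by (metis inverse_unique mult.commute)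
  then show ?thesis by (simp add: c power_inverse)
qed

lemma sum_zz_pow:
  assumes "0 < m" "k < m"
  shows "(\<Sum>a<m. zz m a ^ k) = (if k = 0 then of_nat m else 0)"
proof -
  let ?y = "inverse (omega m ^ k)"
  have e: "zz m a ^ k = ?y ^ a" for a
    by (simp add: zz_def power_inverse flip: power_mult) (simp add: mult.commute)
  have ym: "?y ^ m = 1"
    by (simp add: power_inverse omega_pow_pow_m[OF assms(1)])
  have y1: "?y = 1 \<longleftrightarrow> k = 0"
    using omega_pow_ne1[of k m] assms by (auto simp: inverse_eq_iff_eq)
  show ?thesis unfolding e using sum_roots[OF ym] y1 by simp
qed

lemma omega_pow_inj:
  assumes "v < m" "a < m" "omega m ^ v = omega m ^ a"
  shows "v = a"
proof (rule ccontr)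
  assume "v \<noteq> a"
  then consider "a < v" | "v < a" by linarith
  then show False
  proof cases
    case 1
    then have "omega m ^ v = omega m ^ a * omega m ^ (v - a)" by (simp flip: power_add)
    then have "omega m ^ (v - a) = 1" using assms(3) omega_nz by simp
    then show False using omega_pow_ne1[of "v - a" m] 1 assms by auto
  next
    case 2
    then have "omega m ^ a = omega m ^ v * omega m ^ (a - v)" by (simp flip: power_add)
    then have "omega m ^ (a - v) = 1" using assms(3) omega_nz by simp
    then show False using omega_pow_ne1[of "a - v" m] 2 assms by auto
  qed
qed

lemma sum_zz_omega:
  assumes "0 < m" "v < m" "a < m"
  shows "(\<Sum>k<m. zz m a ^ k * omega m ^ (v * k)) = (if v = a then of_nat m else 0)"
proof -
  let ?y = "inverse (omega m ^ a) * omega m ^ v"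
  have e: "zz m a ^ k * omega m ^ (v * k) = ?y ^ k" for k
    by (simp add: zz_def power_inverse power_mult_distrib flip: power_mult)
  have ym: "?y ^ m = 1"
    by (simp add: power_inverse power_mult_distrib omega_pow_pow_m[OF assms(1)])
  have y1: "?y = 1 \<longleftrightarrow> v = a"
  proof
    assume "?y = 1"
    then have "omega m ^ v = omega m ^ a" using omega_nz[of m]
      by (simp add: field_simps)
    then show "v = a" using omega_pow_inj assms by blast
  next
    assume "v = a" then show "?y = 1" using omega_nz by simp
  qed
  show ?thesis unfolding e using sum_roots[OF ym] y1 by simp
qed

lemma per_shift:
  fixes F :: "nat \<Rightarrow> complex"
  assumes "\<And>j. F (j + m) = F j"
  shows "(\<Sum>k<m. F (j + k)) = (\<Sum>k<m. F k)"
  using assms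
proof (induction j arbitrary: F)
  case 0 then show ?case by simp
next
  case (Suc j)
  let ?G = "\<lambda>i. F (Suc i)"
  have "(\<Sum>k<m. F (Suc j + k)) = (\<Sum>k<m. ?G (j + k))" by simp
  also have "\<dots> = (\<Sum>k<m. ?G k)" by (rule Suc.IH) (simp add: Suc.prems flip: add_Suc)
  also have "\<dots> = (\<Sum>k<m. F k)"
  proof -
    have "(\<Sum>k<Suc m. F k) = F 0 + (\<Sum>k<m. ?G k)" by (rule sum.lessThan_Suc_shift)
    moreover have "(\<Sum>k<Suc m. F k) = (\<Sum>k<m. F k) + F m" by simp
    moreover have "F m = F 0" using Suc.prems[of 0] by simp
    ultimately show ?thesis by (simp add: add.commute)
  qed
  finally show ?case .
qed

lemma per_reflect:
  fixes F :: "nat \<Rightarrow> complex"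
  assumes "\<And>j. F (j + m) = F j"
  shows "(\<Sum>k<m. F (m - k)) = (\<Sum>k<m. F k)"
proof -
  have "(\<Sum>k<m. F (m - k)) = (\<Sum>i<m. (\<lambda>i. F (Suc i)) (m - Suc i))"
    by (intro sum.cong refl) (simp add: Suc_diff_Suc)
  also have "\<dots> = (\<Sum>i<m. F (Suc i))" by (rule sum.nat_diff_reindex)
  also have "\<dots> = (\<Sum>i<m. F (1 + i))" by simp
  also have "\<dots> = (\<Sum>k<m. F k)" by (rule per_shift) (rule assms)
  finally show ?thesis .
qed



definition ec :: "nat \<Rightarrow> nat \<Rightarrow> nat \<Rightarrow> complex" where "ec m a k = zz m a ^ k / of_nat m"

lemma ugen_delta: "ugen m v = delta (Lw m v 1)" by (simp add: ugen_def Lw_def)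

lemma Lw_0: "Lw m v 0 = []" by (simp add: Lw_simp)

lemma Lw_per: "Lw m v (j + m) = Lw m v j" by (simp add: Lw_simp)

lemma ascale_1: "ascale 1 f = f" by (simp add: ascale_def)
lemma ascale_ascale: "ascale a (ascale b f) = ascale (a * b) f" by (simp add: ascale_def mult.assoc)

lemma apow_eq: "0 < m \<Longrightarrow> apow m (ascale z (ugen m v)) k = ascale (z^k) (delta (Lw m v k))"
proof (induction k)
  case 0 show ?case by (simp add: apow_def aone_delta Lw_0 ascale_1)
next
  case (Suc k)
  have "apow m (ascale z (ugen m v)) (Suc k) = amult m (ascale z (ugen m v)) (apow m (ascale z (ugen m v)) k)"
    by (simp add: apow_def)
  also have "\<dots> = amult m (ascale z (delta (Lw m v 1))) (ascale (z^k) (delta (Lw m v k)))"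
    using Suc by (simp add: ugen_delta)
  also have "\<dots> = ascale z (ascale (z^k) (amult m (delta (Lw m v 1)) (delta (Lw m v k))))"
    by (simp add: amult_ascale_left amult_ascale_right fs_intros ascale_ascale mult.commute)
  also have "\<dots> = ascale (z^Suc k) (delta (Lw m v (Suc k)))"
    using Lw_add[OF Suc.prems, of v 1 k]
    by (simp add: amult_delta wmult_Lw ascale_ascale mult.commute del: cons_red.simps)
  finally show ?case .
qed

lemma eproj_lc: assumes "0 < m" shows "eproj m v a = lc {..<m} (ec m a) (Lw m v)"
proof (rule ext)
  fix w
  have "eproj m v a w = 1 / of_nat m * (\<Sum>k<m. zz m a ^ k * delta (Lw m v k) w)"
    unfolding eproj_def apow_eq[OF assms] by (simp add: ascale_def zz_def)
  also have "\<dots> = (\<Sum>k<m. if Lw m v k = w then ec m a k else 0)"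
    unfolding sum_distrib_left by (intro sum.cong refl) (auto simp: ec_def delta_def)
  finally show "eproj m v a w = lc {..<m} (ec m a) (Lw m v) w" by (simp add: lc_def)
qed

lemma eproj_Alg: "0 < m \<Longrightarrow> v < N \<Longrightarrow> eproj m v a \<in> Alg N m"
  by (simp add: eproj_lc Alg_lc Lw_reduced)

lemma fs_eproj: "0 < m \<Longrightarrow> finite (spt (eproj m v a))"
  by (simp add: eproj_lc fs_lc)

definition FF :: "nat \<Rightarrow> nat \<Rightarrow> nat \<Rightarrow> word \<Rightarrow> nat \<Rightarrow> complex" where
  "FF m v a w j = (if Lw m v j = w then zz m a ^ j / of_nat m else 0)"

lemma FF_per: "0 < m \<Longrightarrow> FF m v a w (j + m) = FF m v a w j"
  by (simp add: FF_def Lw_per power_add zz_pow_m')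

lemma eproj_idem:
  assumes "0 < m"
  shows "amult m (eproj m v a) (eproj m v a) = eproj m v a"
proof (rule ext)
  fix w
  have "amult m (eproj m v a) (eproj m v a) w =
     (\<Sum>p\<in>{..<m}\<times>{..<m}. if wmult m (Lw m v (fst p)) (Lw m v (snd p)) = w then ec m a (fst p) * ec m a (snd p) else 0)"
    unfolding eproj_lc[OF assms] amult_lc[OF finite_lessThan finite_lessThan] by (simp only: lc_def)
  also have "\<dots> = (\<Sum>k<m. \<Sum>l<m. 1 / of_nat m * FF m v a w (k + l))"
    unfolding sum.cartesian_product' fst_conv snd_conv
    by (intro sum.cong refl)
       (simp add: wmult_Lw Lw_add[OF assms] FF_def ec_def power_add del: cons_red.simps)
  also have "\<dots> = (\<Sum>k<m. 1 / of_nat m * (\<Sum>l<m. FF m v a w l))"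
    by (intro sum.cong refl)
       (simp only: sum_distrib_left[symmetric] per_shift[where F="FF m v a w", OF FF_per[OF assms]])
  also have "\<dots> = (\<Sum>l<m. FF m v a w l)" using assms by simp
  also have "\<dots> = eproj m v a w"
    by (simp only: eproj_lc[OF assms] lc_def FF_def ec_def)
  finally show "amult m (eproj m v a) (eproj m v a) w = eproj m v a w" .
qed

lemma astar_eproj:
  assumes "0 < m"
  shows "astar m (eproj m v a) = eproj m v a"
proof (rule ext)
  fix w
  have "astar m (eproj m v a) w = (\<Sum>k<m. if winv m (Lw m v k) = w then cnj (ec m a k) else 0)"
    unfolding eproj_lc[OF assms]
    by (subst astar_lc[where N="Suc v"]) (auto simp: Lw_reduced assms lc_def)
  also have "\<dots> = (\<Sum>k<m. FF m v a w (m - k))"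
  proof (rule sum.cong[OF refl])
    fix k assume "k \<in> {..<m}"
    then have k: "k < m" by simp
    have "winv m (Lw m v k) = Lw m v (m - k)" using winv_Lw[OF assms, of v k] k by simp
    moreover have "cnj (ec m a k) = zz m a ^ (m - k) / of_nat m"
      using cnj_zz_pow[OF assms, of k a] k by (simp add: ec_def)
    ultimately show "(if winv m (Lw m v k) = w then cnj (ec m a k) else 0) = FF m v a w (m - k)"
      by (simp add: FF_def)
  qed
  also have "\<dots> = (\<Sum>k<m. FF m v a w k)"
    by (rule per_reflect) (rule FF_per[OF assms])
  also have "\<dots> = eproj m v a w"
    by (simp only: eproj_lc[OF assms] lc_def FF_def ec_def)
  finally show "astar m (eproj m v a) w = eproj m v a w" .
qed

lemma asum_eproj:
  assumes "0 < m"
  shows "asum {..<m} (\<lambda>a. eproj m v a) = aone"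
proof (rule ext)
  fix w
  have "asum {..<m} (\<lambda>a. eproj m v a) w = (\<Sum>a<m. \<Sum>k<m. if Lw m v k = w then zz m a ^ k / of_nat m else 0)"
    by (simp only: asum_def eproj_lc[OF assms] lc_def ec_def)
  also have "\<dots> = (\<Sum>k<m. \<Sum>a<m. if Lw m v k = w then zz m a ^ k / of_nat m else 0)"
    by (rule sum.swap)
  also have "\<dots> = (\<Sum>k<m. if Lw m v k = w then (\<Sum>a<m. zz m a ^ k) / of_nat m else 0)"
    by (intro sum.cong refl) (simp add: sum_divide_distrib)
  also have "\<dots> = (\<Sum>k<m. if k = 0 then (if Lw m v k = w then 1 else 0) else 0)"
    by (intro sum.cong refl) (use assms in \<open>simp add: sum_zz_pow\<close>)
  also have "\<dots> = (if Lw m v 0 = w then 1 else 0)"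
    using assms by (simp add: sum.delta)
  also have "\<dots> = aone w" by (simp add: Lw_0 aone_def eq_commute)
  finally show "asum {..<m} (\<lambda>a. eproj m v a) w = aone w" .
qed



definition phi :: "nat \<Rightarrow> word \<Rightarrow> complex" where
  "phi m w = prod_list (map (\<lambda>(v,k). omega m ^ (v*k)) w)"

definition chi :: "nat \<Rightarrow> (word \<Rightarrow> complex) \<Rightarrow> complex" where
  "chi m f = (\<Sum>w\<in>spt f. f w * phi m w)"

lemma phi_Nil[simp]: "phi m [] = 1" by (simp add: phi_def)
lemma phi_Cons[simp]: "phi m ((v,k) # w) = omega m ^ (v*k) * phi m w" by (simp add: phi_def)

lemma om_eq: "0 < m \<Longrightarrow> a mod m = b mod m \<Longrightarrow> omega m ^ a = omega m ^ b"
  by (metis pow_mod_eq omega_pow_m)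

lemma om_mod: "0 < m \<Longrightarrow> omega m ^ (v * (j mod m)) = omega m ^ (v * j)"
  by (rule om_eq) (simp_all add: mod_mult_right_eq)

lemma phi_cons_red:
  assumes "0 < m"
  shows "phi m (cons_red m (v,k) w) = omega m ^ (v*k) * phi m w"
proof (cases "k mod m = 0")
  case True
  then have "omega m ^ (v*k) = 1" using om_mod[OF assms, of v k] by simp
  then show ?thesis using True by simp
next
  case False
  show ?thesis
  proof (cases w)
    case Nil then show ?thesis using False om_mod[OF assms, of v k] by simp
  next
    case (Cons y w')
    obtain v' k' where y: "y = (v', k')" by (cases y)
    show ?thesis
    proof (cases "v = v'")
      case True
      have s: "omega m ^ (v*k) * omega m ^ (v*k') = omega m ^ (v * (k + k'))"
        by (simp add: power_add distrib_left)
      show ?thesis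
      proof (cases "(k + k') mod m = 0")
        case True
        then have "omega m ^ (v * (k + k')) = 1" using om_mod[OF assms, of v "k+k'"] by simp
        then show ?thesis using True \<open>v = v'\<close> False s unfolding Cons y by (simp add: mult.assoc)
      next
        case F2: False
        then show ?thesis using \<open>v = v'\<close> False s om_mod[OF assms, of v "k+k'"]
          unfolding Cons y by (simp add: mult.assoc)
      qed
    next
      case False
      then show ?thesis using \<open>k mod m \<noteq> 0\<close> om_mod[OF assms, of v k] unfolding Cons y by simp
    qed
  qed
qed

lemma phi_wmult: "0 < m \<Longrightarrow> phi m (wmult m x y) = phi m x * phi m y"
proof (induction x)
  case Nil then show ?case by simp
next
  case (Cons a x)
  obtain v k where a: "a = (v,k)" by (cases a)
  show ?case using Cons by (simp add: a phi_cons_red del: cons_red.simps)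
qed

lemma phi_append: "phi m (x @ y) = phi m x * phi m y"
  by (simp add: phi_def)

lemma phi_winv:
  assumes "0 < m"
  shows "reduced N m w \<Longrightarrow> phi m (winv m w) = cnj (phi m w)"
proof (induction w)
  case Nil then show ?case by (simp add: winv_def)
next
  case (Cons a w)
  obtain v k where a: "a = (v,k)" by (cases a)
  have r: "reduced N m w" "k < m" using Cons.prems by (auto simp: a reduced_Cons)
  have u: "cmod (omega m ^ (v*k)) = 1" by (simp add: norm_power norm_omega)
  have "omega m ^ (v*(m-k)) * omega m ^ (v*k) = (omega m ^ m) ^ v"
    using r by (simp flip: power_add power_mult add: mult.commute distrib_left diff_mult_distrib2)
  then have "omega m ^ (v*(m-k)) * omega m ^ (v*k) = 1" using omega_pow_m[OF assms] by simp
  then have e: "omega m ^ (v*(m-k)) = cnj (omega m ^ (v*k))"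
    using cnj_unit[OF u] by (metis inverse_unique mult.commute)
  show ?case
    using Cons.IH[OF r(1)] e by (simp add: a winv_Cons phi_append mult.commute)
qed

lemma chi_eq:
  assumes "finite A" "spt f \<subseteq> A"
  shows "chi m f = (\<Sum>w\<in>A. f w * phi m w)"
  unfolding chi_def
  by (rule sum.mono_neutral_left) (use assms in \<open>auto simp: spt_def\<close>)

lemma chi_aadd: "finite (spt f) \<Longrightarrow> finite (spt g) \<Longrightarrow> chi m (aadd f g) = chi m f + chi m g"
proof -
  assume f: "finite (spt f)" and g: "finite (spt g)"
  let ?A = "spt f \<union> spt g"
  have "chi m (aadd f g) = (\<Sum>w\<in>?A. aadd f g w * phi m w)" by (rule chi_eq) (use f g spt_aadd in auto)
  moreover have "chi m f = (\<Sum>w\<in>?A. f w * phi m w)" by (rule chi_eq) (use f g in auto)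
  moreover have "chi m g = (\<Sum>w\<in>?A. g w * phi m w)" by (rule chi_eq) (use f g in auto)
  ultimately show ?thesis by (simp add: aadd_def distrib_right sum.distrib)
qed

lemma chi_asub: "finite (spt f) \<Longrightarrow> finite (spt g) \<Longrightarrow> chi m (asub f g) = chi m f - chi m g"
proof -
  assume f: "finite (spt f)" and g: "finite (spt g)"
  let ?A = "spt f \<union> spt g"
  have "chi m (asub f g) = (\<Sum>w\<in>?A. asub f g w * phi m w)" by (rule chi_eq) (use f g spt_asub in auto)
  moreover have "chi m f = (\<Sum>w\<in>?A. f w * phi m w)" by (rule chi_eq) (use f g in auto)
  moreover have "chi m g = (\<Sum>w\<in>?A. g w * phi m w)" by (rule chi_eq) (use f g in auto)
  ultimately show ?thesis by (simp add: asub_def left_diff_distrib sum_subtractf)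
qed

lemma chi_ascale: "finite (spt f) \<Longrightarrow> chi m (ascale c f) = c * chi m f"
proof -
  assume f: "finite (spt f)"
  have "chi m (ascale c f) = (\<Sum>w\<in>spt f. ascale c f w * phi m w)" by (rule chi_eq) (use f spt_ascale in auto)
  then show ?thesis by (simp add: ascale_def chi_def sum_distrib_left mult.assoc)
qed

lemma chi_zero: "chi m azero = 0"
  by (simp add: chi_def spt_zero)

lemma chi_aone: "chi m aone = 1"
proof -
  have "chi m aone = (\<Sum>w\<in>{[]}. aone w * phi m w)" by (rule chi_eq) (auto simp: aone_delta spt_delta)
  then show ?thesis by simp
qed

lemma chi_lc:
  assumes "finite I"
  shows "chi m (lc I c x) = (\<Sum>i\<in>I. c i * phi m (x i))"
proof -
  have "chi m (lc I c x) = (\<Sum>w\<in>x`I. lc I c x w * phi m w)" by (rule chi_eq) (use assms spt_lc[of I c x] in auto)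
  also have "\<dots> = (\<Sum>w\<in>x`I. \<Sum>i\<in>I. if x i = w then c i * phi m w else 0)"
    unfolding lc_def sum_distrib_right by (intro sum.cong refl) auto
  also have "\<dots> = (\<Sum>i\<in>I. \<Sum>w\<in>x`I. if x i = w then c i * phi m w else 0)" by (rule sum.swap)
  also have "\<dots> = (\<Sum>i\<in>I. c i * phi m (x i))"
    by (intro sum.cong refl) (use assms in \<open>simp add: sum.delta\<close>)
  finally show ?thesis .
qed

lemma chi_amult:
  assumes "0 < m" "finite (spt f)" "finite (spt g)"
  shows "chi m (amult m f g) = chi m f * chi m g"
proof -
  let ?A = "spt f" and ?B = "spt g"
  let ?S = "(\<lambda>p. wmult m (fst p) (snd p)) ` (?A \<times> ?B)"
  have fS: "finite ?S" using assms(2,3) by simp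
  have "chi m (amult m f g) = (\<Sum>w\<in>?S. amult m f g w * phi m w)"
    by (rule chi_eq) (use fS spt_amult in auto)
  also have "\<dots> = (\<Sum>w\<in>?S. \<Sum>x\<in>?A. \<Sum>y\<in>?B. if wmult m x y = w then f x * g y * phi m w else 0)"
    unfolding amult_eq[OF assms(2,3) order_refl order_refl] sum_distrib_right
    by (intro sum.cong refl) auto
  also have "\<dots> = (\<Sum>x\<in>?A. \<Sum>y\<in>?B. \<Sum>w\<in>?S. if wmult m x y = w then f x * g y * phi m w else 0)"
  proof -
    have "(\<Sum>w\<in>?S. \<Sum>x\<in>?A. \<Sum>y\<in>?B. if wmult m x y = w then f x * g y * phi m w else 0)
       = (\<Sum>x\<in>?A. \<Sum>w\<in>?S. \<Sum>y\<in>?B. if wmult m x y = w then f x * g y * phi m w else 0)"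
      by (rule sum.swap)
    also have "\<dots> = (\<Sum>x\<in>?A. \<Sum>y\<in>?B. \<Sum>w\<in>?S. if wmult m x y = w then f x * g y * phi m w else 0)"
      by (rule sum.cong[OF refl], rule sum.swap)
    finally show ?thesis .
  qed
  also have "\<dots> = (\<Sum>x\<in>?A. \<Sum>y\<in>?B. f x * g y * phi m (wmult m x y))"
  proof (intro sum.cong refl)
    fix x y assume "x \<in> ?A" "y \<in> ?B"
    then have "wmult m x y \<in> ?S" by force
    then show "(\<Sum>w\<in>?S. if wmult m x y = w then f x * g y * phi m w else 0) = f x * g y * phi m (wmult m x y)"
      using fS by (simp add: sum.delta)
  qed
  finally have 1: "chi m (amult m f g) = (\<Sum>x\<in>?A. \<Sum>y\<in>?B. f x * g y * phi m (wmult m x y))" .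
  show ?thesis
    unfolding 1 unfolding chi_def sum_product phi_wmult[OF assms(1)]
    by (intro sum.cong refl) (simp add: ac_simps)
qed

lemma chi_astar:
  assumes "0 < m" "f \<in> Alg N m"
  shows "chi m (astar m f) = cnj (chi m f)"
proof -
  have fs: "finite (spt f)" and red: "\<And>w. w \<in> spt f \<Longrightarrow> reduced N m w" using assms(2) by (auto simp: Alg_iff)
  have "chi m (astar m f) = (\<Sum>w\<in>winv m ` spt f. astar m f w * phi m w)"
    by (rule chi_eq) (use fs spt_astar[OF assms(2)] in auto)
  also have "\<dots> = (\<Sum>x\<in>spt f. astar m f (winv m x) * phi m (winv m x))"
  proof (rule sum.reindex_cong[OF _ refl])
    show "inj_on (winv m) (spt f)" by (metis inj_onI red winv_winv)
  qed simp
  also have "\<dots> = (\<Sum>x\<in>spt f. cnj (f x * phi m x))"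
    by (intro sum.cong refl) (simp add: astar_def winv_winv[OF red] phi_winv[OF assms(1) red])
  also have "\<dots> = cnj (chi m f)" by (simp add: chi_def)
  finally show ?thesis .
qed

lemma phi_Lw: "0 < m \<Longrightarrow> phi m (Lw m v k) = omega m ^ (v * k)"
  using om_mod[of m v k] by (auto simp: Lw_simp)

lemma chi_eproj:
  assumes "0 < m" "v < m" "a < m"
  shows "chi m (eproj m v a) = (if v = a then 1 else 0)"
proof -
  have "chi m (eproj m v a) = (\<Sum>k<m. ec m a k * omega m ^ (v * k))"
    by (simp add: eproj_lc[OF assms(1)] chi_lc phi_Lw[OF assms(1)])
  also have "\<dots> = (\<Sum>k<m. zz m a ^ k * omega m ^ (v * k)) / of_nat m"
    by (simp add: ec_def sum_divide_distrib)
  also have "\<dots> = (if v = a then 1 else 0)" using sum_zz_omega[OF assms] assms(1) by simp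
  finally show ?thesis .
qed

lemma pos_cone_chi:
  assumes "0 < m"
  shows "p \<in> pos_cone N m \<Longrightarrow> p \<in> Alg N m \<and> Im (chi m p) = 0 \<and> 0 \<le> Re (chi m p)"
proof (induction p rule: pos_cone.induct)
  case zero then show ?case by (simp add: Alg_zero chi_zero)
next
  case (step f g)
  have af: "astar m f \<in> Alg N m" by (rule Alg_astar[OF step.hyps(1)])
  have a1: "amult m (astar m f) f \<in> Alg N m" by (rule Alg_amult[OF assms af step.hyps(1)])
  have fsf: "finite (spt f)" "finite (spt (astar m f))" "finite (spt g)"
    using step af by (auto simp: Alg_iff)
  have fs1: "finite (spt (amult m (astar m f) f))" using a1 by (simp add: Alg_iff)
  have "chi m (aadd (amult m (astar m f) f) g) = cnj (chi m f) * chi m f + chi m g"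
    by (simp add: chi_aadd[OF fs1 fsf(3)] chi_amult[OF assms fsf(2,1)] chi_astar[OF assms step.hyps(1)])
  moreover have "cnj (chi m f) * chi m f = of_real ((cmod (chi m f))^2)"
    using complex_norm_square[of "chi m f"] by (simp add: mult.commute)
  ultimately show ?case using step Alg_aadd[OF a1] by auto
qed

lemma K_simps[simp]: "fst (K n) = n" "snd (K n) v w \<longleftrightarrow> v \<noteq> w"
  by (simp_all add: complete_graph_def)

lemma hom_self:
  assumes "1 \<le> n"
  shows "hered_hom (K n) (K n)"
proof -
  have n0: "0 < n" using assms by simp
  define V where "V = {f \<in> Alg n n. chi n f = 0}"
  have fsA: "finite (spt f)" if "f \<in> Alg n n" for f using that by (simp add: Alg_iff)
  have hV: "hereditary n n V"
    unfolding hereditary_def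
  proof (intro conjI allI impI ballI)
    show "V \<subseteq> Alg n n" by (auto simp: V_def)
    show "azero \<in> V" by (simp add: V_def Alg_zero chi_zero)
    show "aadd x y \<in> V" if "x \<in> V" "y \<in> V" for x y
      using that by (auto simp: V_def Alg_aadd chi_aadd fsA)
    show "ascale c x \<in> V" if "x \<in> V" for c x
      using that by (auto simp: V_def Alg_ascale chi_ascale fsA)
    show "astar n x \<in> V" if "x \<in> V" for x
      using that by (auto simp: V_def Alg_astar chi_astar[OF n0])
    fix f h
    assume f: "f \<in> Alg n n" and f0: "ale n n azero f" and fh: "ale n n f h" and h: "h \<in> V"
    have p1: "asub f azero \<in> pos_cone n n" using f0 by (simp add: ale_def)
    have p2: "asub h f \<in> pos_cone n n" using fh by (simp add: ale_def)
    have hA: "h \<in> Alg n n" "chi n h = 0" using h by (auto simp: V_def)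
    have c1: "chi n (asub f azero) = chi n f" by (simp add: chi_asub fsA[OF f] fs_zero chi_zero)
    have c2: "chi n (asub h f) = chi n h - chi n f" by (simp add: chi_asub fsA[OF f] fsA[OF hA(1)])
    have "Im (chi n f) = 0" "0 \<le> Re (chi n f)" using pos_cone_chi[OF n0 p1] c1 by auto
    moreover have "0 \<le> Re (chi n h - chi n f)" using pos_cone_chi[OF n0 p2] c2 by auto
    ultimately have "chi n f = 0" using hA(2) by (simp add: complex_eq_iff)
    then show "f \<in> V" using f by (simp add: V_def)
  qed
  have gens: "game_gens (K n) (K n) \<subseteq> V"
  proof
    fix x assume "x \<in> game_gens (K n) (K n)"
    then obtain v w a b where x: "x = amult n (eproj n v a) (eproj n w b)"
      and lt: "v < n" "w < n" "a < n" "b < n" and lz: "lam_zero (K n) (K n) v w a b"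
      by (auto simp: game_gens_def)
    have "x \<in> Alg n n" unfolding x by (intro Alg_amult eproj_Alg n0 lt)
    moreover have "chi n x = 0"
      using lz unfolding x
      by (auto simp: chi_amult[OF n0 fs_eproj[OF n0] fs_eproj[OF n0]] chi_eproj[OF n0] lt lam_zero_def)
    ultimately show "x \<in> V" by (simp add: V_def)
  qed
  have ideal: "game_ideal (K n) (K n) \<subseteq> V"
  proof
    fix x assume "x \<in> game_ideal (K n) (K n)"
    then have "x \<in> star_ideal n n (game_gens (K n) (K n))" by (simp add: game_ideal_def)
    then show "x \<in> V"
    proof (induction x rule: star_ideal.induct)
      case (gen x) then show ?case using gens by auto
    next
      case zero then show ?case using hV by (simp add: hereditary_def)
    next
      case (add x y) then show ?case using hV by (simp add: hereditary_def)
    next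
      case (scale x c) then show ?case using hV by (simp add: hereditary_def)
    next
      case (left a x)
      then have "x \<in> Alg n n" "chi n x = 0" by (auto simp: V_def)
      then show ?case using left
        by (auto simp: V_def Alg_amult[OF n0] chi_amult[OF n0] fsA)
    next
      case (right a x)
      then have "x \<in> Alg n n" "chi n x = 0" by (auto simp: V_def)
      then show ?case using right
        by (auto simp: V_def Alg_amult[OF n0] chi_amult[OF n0] fsA)
    next
      case (star x) then show ?case using hV by (simp add: hereditary_def)
    qed
  qed
  have "hered_ideal (K n) (K n) \<subseteq> V"
    unfolding hered_ideal_def using hV ideal by (intro Inter_lower) simp
  moreover have "aone \<notin> V" by (simp add: V_def chi_aone)
  moreover have "aone \<in> Alg n n" by (rule Alg_aone)
  ultimately show ?thesis unfolding hered_hom_def by auto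
qed



lemma hered_azero: "hereditary N m V \<Longrightarrow> azero \<in> V" by (simp add: hereditary_def)
lemma hered_aadd: "hereditary N m V \<Longrightarrow> x \<in> V \<Longrightarrow> y \<in> V \<Longrightarrow> aadd x y \<in> V" by (simp add: hereditary_def)
lemma hered_ascale: "hereditary N m V \<Longrightarrow> x \<in> V \<Longrightarrow> ascale c x \<in> V" by (simp add: hereditary_def)
lemma hered_astar: "hereditary N m V \<Longrightarrow> x \<in> V \<Longrightarrow> astar m x \<in> V" by (simp add: hereditary_def)
lemma hered_Alg: "hereditary N m V \<Longrightarrow> x \<in> V \<Longrightarrow> x \<in> Alg N m" by (auto simp: hereditary_def)

lemma hered_asub: "hereditary N m V \<Longrightarrow> x \<in> V \<Longrightarrow> y \<in> V \<Longrightarrow> asub x y \<in> V"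
proof -
  assume h: "hereditary N m V" and x: "x \<in> V" and y: "y \<in> V"
  have "asub x y = aadd x (ascale (-1) y)" by (simp add: fun_eq_iff asub_def aadd_def ascale_def)
  then show ?thesis using hered_aadd[OF h x hered_ascale[OF h y]] by simp
qed

lemma asum_empty: "asum {} f = azero" by (simp add: asum_def azero_def)
lemma asum_insert: "finite I \<Longrightarrow> i \<notin> I \<Longrightarrow> asum (insert i I) f = aadd (f i) (asum I f)"
  by (simp add: asum_def aadd_def fun_eq_iff)

lemma hered_asum:
  assumes h: "hereditary N m V"
  shows "finite I \<Longrightarrow> (\<And>i. i \<in> I \<Longrightarrow> f i \<in> V) \<Longrightarrow> asum I f \<in> V"
proof (induction I rule: finite_induct)
  case empty then show ?case by (simp add: asum_empty hered_azero[OF h])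
next
  case (insert i I) then show ?case by (simp add: asum_insert hered_aadd[OF h])
qed

lemma aadd_zero: "aadd x azero = x" by (simp add: aadd_def azero_def)
lemma asub_zero: "asub x azero = x" by (simp add: asub_def azero_def)

lemma pos_sq: "q \<in> Alg N m \<Longrightarrow> amult m (astar m q) q \<in> pos_cone N m"
  using pos_cone.step[OF _ pos_cone.zero, of q N m] by (simp add: aadd_zero)

lemma pos_asum: "finite I \<Longrightarrow> (\<And>i. i \<in> I \<Longrightarrow> q i \<in> Alg N m) \<Longrightarrow>
   asum I (\<lambda>i. amult m (astar m (q i)) (q i)) \<in> pos_cone N m"
proof (induction I rule: finite_induct)
  case empty then show ?case by (simp add: asum_empty pos_cone.zero)
next
  case (insert i I) then show ?case by (simp add: asum_insert pos_cone.step)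
qed

lemma selfadj_zero: "selfadj m azero" by (simp add: selfadj_def astar_zero)

lemma hered_apply:
  assumes "hereditary N m V" "f \<in> Alg N m" "selfadj m f" "f \<in> pos_cone N m"
    "h \<in> V" "selfadj m h" "asub h f \<in> pos_cone N m"
  shows "f \<in> V"
proof -
  have "ale N m azero f" using assms by (simp add: ale_def selfadj_zero asub_zero)
  moreover have "ale N m f h" using assms by (simp add: ale_def)
  ultimately show ?thesis using assms unfolding hereditary_def by blast
qed

section \<open>From the unit to everything\<close>

lemma cnj_unit_mult: "cmod c = 1 \<Longrightarrow> cnj c * c = 1"
  using complex_norm_square[of c] by (simp add: mult.commute)

lemma sq_lemma:
  assumes m: "0 < m" and u: "reduced N m u" and c: "cmod c = 1"
  defines "Q \<equiv> aadd aone (ascale c (delta u))"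
  shows "amult m (astar m Q) Q =
     aadd (ascale 2 aone) (aadd (ascale c (delta u)) (ascale (cnj c) (delta (winv m u))))"
proof -
  have U': "reduced N m (winv m u)" using u by (rule winv_reduced)
  have aQ: "astar m Q = aadd aone (ascale (cnj c) (delta (winv m u)))"
    by (simp add: Q_def astar_aadd astar_ascale astar_aone astar_delta[OF u])
  have "amult m (astar m Q) Q =
      aadd (aadd (amult m aone aone) (amult m (ascale (cnj c) (delta (winv m u))) aone))
        (aadd (amult m aone (ascale c (delta u)))
              (amult m (ascale (cnj c) (delta (winv m u))) (ascale c (delta u))))"
    unfolding aQ unfolding Q_def
    by (simp add: amult_aadd_left amult_aadd_right fs_intros)
  also have "\<dots> = aadd (aadd aone (ascale (cnj c) (delta (winv m u))))
        (aadd (ascale c (delta u)) (ascale (cnj c * c) aone))"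
    by (simp add: amult_one_left amult_one_right[OF Alg_ascale[OF Alg_delta[OF U']]] fs_intros
        amult_ascale_left amult_ascale_right amult_delta wmult_winv_self[OF u] aone_delta ascale_ascale
        wmult_Nil_right[OF U'] mult.commute)
  also have "\<dots> = aadd (ascale 2 aone) (aadd (ascale c (delta u)) (ascale (cnj c) (delta (winv m u))))"
    using cnj_unit_mult[OF c] by (simp add: fun_eq_iff aadd_def ascale_def)
  finally show ?thesis .
qed

lemma hered_unit_all:
  assumes m: "0 < m" and h: "hereditary N m V" and one: "aone \<in> V"
  shows "Alg N m \<subseteq> V"
proof -
  have T: "aadd (ascale c (delta u)) (ascale (cnj c) (delta (winv m u))) \<in> V"
    if u: "reduced N m u" and c: "cmod c = 1" for u c
  proof -
    let ?T = "aadd (ascale c (delta u)) (ascale (cnj c) (delta (winv m u)))"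
    let ?T' = "aadd (ascale (-c) (delta u)) (ascale (cnj (-c)) (delta (winv m u)))"
    let ?f = "aadd (ascale 2 aone) ?T"
    have U': "reduced N m (winv m u)" using u by (rule winv_reduced)
    have c': "cmod (-c) = 1" using c by simp
    have QA: "aadd aone (ascale d (delta u)) \<in> Alg N m" for d
      by (intro Alg_aadd Alg_aone Alg_ascale Alg_delta u)
    have fA: "?f \<in> Alg N m"
      by (intro Alg_aadd Alg_aone Alg_ascale Alg_delta u U')
    have fP: "?f \<in> pos_cone N m"
      using pos_sq[OF QA[of c]] sq_lemma[OF m u c] by simp
    have saT: "astar m (aadd (ascale d (delta u)) (ascale (cnj d) (delta (winv m u)))) =
               aadd (ascale d (delta u)) (ascale (cnj d) (delta (winv m u)))" for d
      unfolding astar_aadd astar_ascale astar_delta[OF u] astar_delta[OF U'] winv_winv[OF u] complex_cnj_cnj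
      by (simp add: fun_eq_iff aadd_def ascale_def)
    have fS: "selfadj m ?f" unfolding selfadj_def
      by (subst astar_aadd, subst saT, simp add: astar_ascale astar_aone)
    have hV: "ascale 4 aone \<in> V" by (rule hered_ascale[OF h one])
    have hS: "selfadj m (ascale 4 aone)" by (simp add: selfadj_def astar_ascale astar_aone)
    have "asub (ascale 4 aone) ?f = aadd (ascale 2 aone) ?T'"
      by (simp add: fun_eq_iff asub_def aadd_def ascale_def)
    then have dP: "asub (ascale 4 aone) ?f \<in> pos_cone N m"
      using pos_sq[OF QA[of "-c"]] sq_lemma[OF m u c'] by simp
    have "?f \<in> V" by (rule hered_apply[OF h fA fS fP hV hS dP])
    then have "asub ?f (ascale 2 aone) \<in> V" by (intro hered_asub[OF h] hered_ascale[OF h one])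
    moreover have "asub ?f (ascale 2 aone) = ?T" by (simp add: fun_eq_iff asub_def aadd_def ascale_def)
    ultimately show ?thesis by simp
  qed
  have D: "delta u \<in> V" if u: "reduced N m u" for u
  proof -
    let ?T1 = "aadd (ascale 1 (delta u)) (ascale (cnj 1) (delta (winv m u)))"
    let ?Ti = "aadd (ascale \<i> (delta u)) (ascale (cnj \<i>) (delta (winv m u)))"
    have "?T1 \<in> V" "?Ti \<in> V" using T[OF u, of 1] T[OF u, of \<i>] by simp_all
    then have "ascale (1/2) (asub ?T1 (ascale \<i> ?Ti)) \<in> V"
      by (intro hered_ascale[OF h] hered_asub[OF h] hered_ascale[OF h])
    moreover have "ascale (1/2) (asub ?T1 (ascale \<i> ?Ti)) = delta u"
      by (simp add: fun_eq_iff asub_def aadd_def ascale_def algebra_simps)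
    ultimately show ?thesis by simp
  qed
  show ?thesis
  proof
    fix f assume f: "f \<in> Alg N m"
    then have fs: "finite (spt f)" and red: "\<And>w. w \<in> spt f \<Longrightarrow> reduced N m w" by (auto simp: Alg_iff)
    have "asum (spt f) (\<lambda>w. ascale (f w) (delta w)) \<in> V"
      by (rule hered_asum[OF h fs]) (intro hered_ascale[OF h] D red)
    moreover have "asum (spt f) (\<lambda>w. ascale (f w) (delta w)) = f"
    proof (rule ext)
      fix x
      have "asum (spt f) (\<lambda>w. ascale (f w) (delta w)) x = (\<Sum>w\<in>spt f. if w = x then f w else 0)"
        unfolding asum_def ascale_def delta_def by (intro sum.cong refl) auto
      also have "\<dots> = f x" using fs by (simp add: sum.delta' spt_def)
      finally show "asum (spt f) (\<lambda>w. ascale (f w) (delta w)) x = f x" .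
    qed
    ultimately show "f \<in> V" by simp
  qed
qed



lemma astar_amult_W:
  assumes m: "0 < m" and f: "f \<in> Alg N m" and g: "g \<in> Alg N m"
    and W: "\<And>x y. x \<in> spt f \<Longrightarrow> y \<in> spt g \<Longrightarrow> winv m (wmult m x y) = wmult m (winv m y) (winv m x)"
  shows "astar m (amult m f g) = amult m (astar m g) (astar m f)"
proof (rule ext)
  fix w
  let ?A = "spt f" and ?B = "spt g"
  have fsA: "finite ?A" and redA: "\<And>x. x \<in> ?A \<Longrightarrow> reduced N m x" using f by (auto simp: Alg_iff)
  have fsB: "finite ?B" and redB: "\<And>x. x \<in> ?B \<Longrightarrow> reduced N m x" using g by (auto simp: Alg_iff)
  have L: "astar m (amult m f g) w = cnj (\<Sum>x\<in>?A. \<Sum>y\<in>?B. if wmult m x y = winv m w then f x * g y else 0)"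
    unfolding astar_def amult_eq[OF fsA fsB order_refl order_refl] ..
  have "amult m (astar m g) (astar m f) w = (\<Sum>y'\<in>winv m ` ?B. \<Sum>x'\<in>winv m ` ?A.
      if wmult m y' x' = w then astar m g y' * astar m f x' else 0)"
    by (rule amult_eq) (use spt_astar[OF g] spt_astar[OF f] fsA fsB in auto)
  also have "\<dots> = (\<Sum>y\<in>?B. \<Sum>x'\<in>winv m ` ?A.
      if wmult m (winv m y) x' = w then cnj (g y) * astar m f x' else 0)"
  proof (rule sum.reindex_cong[of "winv m"])
    show "inj_on (winv m) ?B" by (metis inj_onI redB winv_winv)
    show "winv m ` ?B = winv m ` ?B" ..
    fix y assume y: "y \<in> ?B"
    have "astar m g (winv m y) = cnj (g y)" by (simp add: astar_def winv_winv[OF redB[OF y]])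
    then show "(\<Sum>x'\<in>winv m ` ?A. if wmult m (winv m y) x' = w then astar m g (winv m y) * astar m f x' else 0) =
      (\<Sum>x'\<in>winv m ` ?A. if wmult m (winv m y) x' = w then cnj (g y) * astar m f x' else 0)"
      by (simp only:)
  qed
  also have "\<dots> = (\<Sum>y\<in>?B. \<Sum>x\<in>?A.
      if wmult m (winv m y) (winv m x) = w then cnj (g y) * cnj (f x) else 0)"
  proof (rule sum.cong[OF refl])
    fix y assume y: "y \<in> ?B"
    show "(\<Sum>x'\<in>winv m ` ?A. if wmult m (winv m y) x' = w then cnj (g y) * astar m f x' else 0) =
      (\<Sum>x\<in>?A. if wmult m (winv m y) (winv m x) = w then cnj (g y) * cnj (f x) else 0)"
    proof (rule sum.reindex_cong[of "winv m"])
      show "inj_on (winv m) ?A" by (metis inj_onI redA winv_winv)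
      show "winv m ` ?A = winv m ` ?A" ..
      fix x assume x: "x \<in> ?A"
      have "astar m f (winv m x) = cnj (f x)" by (simp add: astar_def winv_winv[OF redA[OF x]])
      then show "(if wmult m (winv m y) (winv m x) = w then cnj (g y) * astar m f (winv m x) else 0) =
        (if wmult m (winv m y) (winv m x) = w then cnj (g y) * cnj (f x) else 0)"
        by (simp only:)
    qed
  qed
  also have "\<dots> = (\<Sum>x\<in>?A. \<Sum>y\<in>?B.
      if wmult m (winv m y) (winv m x) = w then cnj (g y) * cnj (f x) else 0)"
    by (rule sum.swap)
  also have "\<dots> = (\<Sum>x\<in>?A. \<Sum>y\<in>?B. cnj (if wmult m x y = winv m w then f x * g y else 0))"
  proof (intro sum.cong refl)
    fix x y assume x: "x \<in> ?A" and y: "y \<in> ?B"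
    have r: "reduced N m (wmult m x y)" by (rule wmult_reduced[OF m redA[OF x] redB[OF y]])
    have "wmult m (winv m y) (winv m x) = w \<longleftrightarrow> wmult m x y = winv m w"
      using W[OF x y] winv_eq_iff[OF r, of w] by auto
    then show "(if wmult m (winv m y) (winv m x) = w then cnj (g y) * cnj (f x) else 0) =
       cnj (if wmult m x y = winv m w then f x * g y else 0)" by (simp add: mult.commute)
  qed
  also have "\<dots> = astar m (amult m f g) w" unfolding L by (simp add: cnj_sum)
  finally show "astar m (amult m f g) w = amult m (astar m g) (astar m f) w" by simp
qed

lemma game_gen_in:
  assumes "v < n" "w < n" "a < m" "v \<noteq> w"
  shows "amult m (eproj m v a) (eproj m w a) \<in> game_ideal (K n) (K m)"
proof -
  have "amult m (eproj m v a) (eproj m w a) \<in> game_gens (K n) (K m)"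
    unfolding game_gens_def mem_Collect_eq
    by (rule exI[of _ v], rule exI[of _ w], rule exI[of _ a], rule exI[of _ a])
       (use assms in \<open>simp add: lam_zero_def\<close>)
  then show ?thesis unfolding game_ideal_def by (simp add: star_ideal.gen)
qed

lemma unit_in_V:
  assumes m: "0 < m" and nm: "m < n" and h: "hereditary n m V" and I: "game_ideal (K n) (K m) \<subseteq> V"
  shows "aone \<in> V"
proof -
  define e where "e v a = eproj m v a" for v a
  define s where "s a = asum {..<n} (\<lambda>v. e v a)" for a
  define q where "q a = asub aone (s a)" for a
  define D where "D v = {..<n} - {v}" for v
  define G where "G a = asum {..<n} (\<lambda>v. asum (D v) (\<lambda>w. amult m (e v a) (e w a)))" for a
  define J where "J = asum {..<m} G"
  define P where "P = asum {..<m} (\<lambda>a. amult m (astar m (q a)) (q a))"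
  define f0 where "f0 = ascale (of_nat (n - m)) aone"
  have eA: "e v a \<in> Alg n m" if "v < n" for v a unfolding e_def using eproj_Alg[OF m that] .
  have efs: "finite (spt (e v a))" for v a unfolding e_def by (rule fs_eproj[OF m])
  have sA: "s a \<in> Alg n m" for a unfolding s_def by (intro Alg_asum eA) auto
  have sfs: "finite (spt (s a))" for a using sA[of a] by (simp add: Alg_iff)
  have qA: "q a \<in> Alg n m" for a unfolding q_def by (intro Alg_asub Alg_aone sA)
  have qfs: "finite (spt (q a))" for a using qA[of a] by (simp add: Alg_iff)
  have qS: "astar m (q a) = q a" for a
    unfolding q_def s_def e_def by (simp add: astar_asub astar_aone astar_asum astar_eproj[OF m])
  have JV: "J \<in> V"
    unfolding J_def G_def D_def e_def
    by (intro hered_asum[OF h] subsetD[OF I] game_gen_in) auto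
  have qq: "amult m (q a) (q a) x = aone x - s a x + G a x" for a x
  proof -
    have ss: "amult m (s a) (s a) = asum {..<n} (\<lambda>v. asum {..<n} (\<lambda>w. amult m (e v a) (e w a)))"
    proof -
      have ss0: "amult m (s a) (s a) = asum {..<n} (\<lambda>v. amult m (e v a) (s a))"
        by (subst (1) s_def, rule amult_asum_left) (auto simp: efs sfs)
      have ss1: "amult m (e v a) (s a) = asum {..<n} (\<lambda>w. amult m (e v a) (e w a))" for v
        unfolding s_def by (rule amult_asum_right) (auto simp: efs)
      show ?thesis unfolding ss0 ss1 ..
    qed
    have inner: "(\<Sum>w<n. amult m (e v a) (e w a) x) = e v a x + (\<Sum>w\<in>D v. amult m (e v a) (e w a) x)"
      if "v < n" for v
    proof -
      have "(\<Sum>w<n. amult m (e v a) (e w a) x) = amult m (e v a) (e v a) x + (\<Sum>w\<in>D v. amult m (e v a) (e w a) x)"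
        unfolding D_def using that by (subst sum.remove[of _ v]) auto
      then show ?thesis by (simp add: e_def eproj_idem[OF m])
    qed
    have "amult m (q a) (q a) = asub (asub aone (s a)) (asub (s a) (amult m (s a) (s a)))"
      unfolding q_def
      by (simp add: amult_asub_left amult_asub_right fs_intros sfs amult_one_left amult_one_right[OF sA])
    then have "amult m (q a) (q a) x = aone x - s a x - (s a x - (\<Sum>v<n. \<Sum>w<n. amult m (e v a) (e w a) x))"
      by (simp add: ss asub_def asum_def)
    also have "(\<Sum>v<n. \<Sum>w<n. amult m (e v a) (e w a) x) = (\<Sum>v<n. e v a x + (\<Sum>w\<in>D v. amult m (e v a) (e w a) x))"
      by (intro sum.cong refl inner) simp
    also have "\<dots> = s a x + G a x" by (simp add: sum.distrib s_def G_def asum_def)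
    finally show ?thesis by simp
  qed
  have Px: "P x = of_nat m * aone x - of_nat n * aone x + J x" for x
  proof -
    have "P x = (\<Sum>a<m. aone x - s a x + G a x)"
      unfolding P_def asum_def qS by (intro sum.cong refl qq)
    also have "\<dots> = of_nat m * aone x - (\<Sum>a<m. s a x) + J x"
      by (simp add: sum.distrib sum_subtractf J_def asum_def)
    also have "(\<Sum>a<m. s a x) = (\<Sum>v<n. \<Sum>a<m. e v a x)"
      unfolding s_def asum_def by (rule sum.swap)
    also have "\<dots> = (\<Sum>v<n. aone x)"
      by (intro sum.cong refl) (simp add: e_def fun_cong[OF asum_eproj[OF m], unfolded asum_def])
    finally show ?thesis by simp
  qed
  have key: "asub J f0 = P"
  proof (rule ext)
    fix x
    have e: "of_nat (n - m) = (of_nat n - of_nat m :: complex)" using nm by (simp add: of_nat_diff)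
    show "asub J f0 x = P x" unfolding asub_def f0_def ascale_def Px e by (simp add: algebra_simps)
  qed
  have JP: "J = aadd P f0"
  proof (rule ext)
    fix x
    have "J x - f0 x = P x" using fun_cong[OF key, of x] by (simp add: asub_def)
    then show "J x = aadd P f0 x" by (simp add: aadd_def algebra_simps)
  qed
  have PP: "P \<in> pos_cone n m" unfolding P_def by (intro pos_asum qA) auto
  \<comment> \<open>self-adjointness of P via the anti-multiplicativity on short words\<close>
  define WW where "WW = {Lw m v k | v k. v < n \<and> k < m}"
  have nil: "[] \<in> WW" unfolding WW_def using nm m by (auto intro!: exI[of _ 0] simp: Lw_0)
  have sptq: "spt (q a) \<subseteq> WW" for a
  proof -
    have "spt (q a) \<subseteq> spt aone \<union> spt (s a)" unfolding q_def by (rule spt_asub)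
    also have "spt (s a) \<subseteq> (\<Union>v\<in>{..<n}. spt (e v a))" unfolding s_def by (rule spt_asum)
    also have "(\<Union>v\<in>{..<n}. spt (e v a)) \<subseteq> WW"
    proof (intro UN_least)
      fix v assume "v \<in> {..<n}"
      then have v: "v < n" by simp
      show "spt (e v a) \<subseteq> WW"
      proof
        fix x assume "x \<in> spt (e v a)"
        then have "x \<in> Lw m v ` {..<m}" unfolding e_def eproj_lc[OF m]
          using spt_lc[of "{..<m}" "ec m a" "Lw m v"] by blast
        then obtain k where "k < m" "x = Lw m v k" by auto
        then show "x \<in> WW" unfolding WW_def using v by blast
      qed
    qed
    finally show ?thesis using nil by (auto simp: aone_delta spt_delta)
  qed
  have Wprop: "winv m (wmult m x y) = wmult m (winv m y) (winv m x)" if "x \<in> WW" "y \<in> WW" for x y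
    using that unfolding WW_def using winv_wmult_Lw[OF m] by auto
  have selfP: "selfadj m P"
  proof -
    have "astar m (amult m (q a) (q a)) = amult m (q a) (q a)" for a
      using astar_amult_W[OF m qA qA Wprop] sptq qS by auto
    then show ?thesis unfolding selfadj_def P_def qS astar_asum by simp
  qed
  have f0S: "selfadj m f0" by (simp add: selfadj_def f0_def astar_ascale astar_aone)
  have f0A: "f0 \<in> Alg n m" unfolding f0_def by (intro Alg_ascale Alg_aone)
  have f0P: "f0 \<in> pos_cone n m"
  proof -
    define r where "r = ascale (complex_of_real (sqrt (real (n - m)))) aone"
    have rA: "r \<in> Alg n m" unfolding r_def by (intro Alg_ascale Alg_aone)
    have "amult m (astar m r) r = f0"
      unfolding r_def f0_def
      by (simp add: astar_ascale astar_aone amult_ascale_left amult_ascale_right fs_intros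
          amult_one_left ascale_ascale flip: of_real_mult)
    then show ?thesis using pos_sq[OF rA] by simp
  qed
  have selfJ: "selfadj m J" using selfP f0S unfolding JP selfadj_def by (simp add: astar_aadd)
  have "f0 \<in> V" by (rule hered_apply[OF h f0A f0S f0P JV selfJ]) (simp add: key PP)
  then have "ascale (1 / of_nat (n - m)) f0 \<in> V" by (rule hered_ascale[OF h])
  moreover have "ascale (1 / of_nat (n - m)) f0 = aone" using nm by (simp add: f0_def ascale_def fun_eq_iff)
  ultimately show ?thesis by simp
qed



lemma Alg_hered: "0 < m \<Longrightarrow> hereditary N m (Alg N m)"
  unfolding hereditary_def by (auto simp: Alg_zero Alg_aadd Alg_ascale Alg_astar)

lemma ideal_Alg:
  assumes m: "0 < m"
  shows "game_ideal (K n) (K m) \<subseteq> Alg n m"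
proof
  fix x assume "x \<in> game_ideal (K n) (K m)"
  then have "x \<in> star_ideal n m (game_gens (K n) (K m))" by (simp add: game_ideal_def)
  then show "x \<in> Alg n m"
  proof (induction x rule: star_ideal.induct)
    case (gen x)
    then obtain v w a b where "x = amult m (eproj m v a) (eproj m w b)" "v < n" "w < n"
      by (auto simp: game_gens_def)
    then show ?case by (simp add: Alg_amult[OF m] eproj_Alg[OF m])
  next
    case zero then show ?case by (rule Alg_zero)
  next
    case (add x y) then show ?case by (simp add: Alg_aadd)
  next
    case (scale x c) then show ?case by (simp add: Alg_ascale)
  next
    case (left a x) then show ?case by (simp add: Alg_amult[OF m])
  next
    case (right a x) then show ?case by (simp add: Alg_amult[OF m])
  next
    case (star x) then show ?case by (simp add: Alg_astar)
  qed
qed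

lemma not_hom:
  assumes "1 \<le> m" "m < n"
  shows "\<not> hered_hom (K n) (K m)"
proof -
  have m: "0 < m" using assms by simp
  have "hered_ideal (K n) (K m) \<subseteq> Alg n m"
    unfolding hered_ideal_def using Alg_hered[OF m] ideal_Alg[OF m]
    by (intro Inter_lower) simp
  moreover have "Alg n m \<subseteq> hered_ideal (K n) (K m)"
    unfolding hered_ideal_def
  proof (rule Inter_greatest)
    fix V assume "V \<in> {V. hereditary (fst (K n)) (fst (K m)) V \<and> game_ideal (K n) (K m) \<subseteq> V}"
    then have h: "hereditary n m V" and I: "game_ideal (K n) (K m) \<subseteq> V" by auto
    show "Alg n m \<subseteq> V" by (rule hered_unit_all[OF m h unit_in_V[OF m assms(2) h I]])
  qed
  ultimately show ?thesis unfolding hered_hom_def by auto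
qed

theorem mainTheorem12:
  shows "(\<forall>n c. 1 \<le> n \<longrightarrow> 1 \<le> c \<longrightarrow> hered_hom (K n) (K c) \<longrightarrow> n \<le> c) \<and>
         (\<forall>n. 1 \<le> n \<longrightarrow> chi_hered (K n) = n)"
proof -
  have P1: "n \<le> c" if "1 \<le> n" "1 \<le> c" "hered_hom (K n) (K c)" for n c
  proof (rule ccontr)
    assume "\<not> n \<le> c"
    then have "c < n" by simp
    then show False using not_hom[OF that(2)] that(3) by simp
  qed
  have P2: "chi_hered (K n) = n" if "1 \<le> n" for n
    unfolding chi_hered_def
  proof (rule Least_equality)
    show "1 \<le> n \<and> hered_hom (K n) (K n)" using that hom_self by simp
    fix c assume "1 \<le> c \<and> hered_hom (K n) (K c)"
    then show "n \<le> c" using P1 that by blast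
  qed
  show ?thesis using P1 P2 by blast
qed

end
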